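(* Let $\boldsymbol\lambda=\{\lambda_m\}_{m\in\mathbb{N}_0}$ be a monotonically increasing sequence of positive numbers, let $D>0$ and $\mathbb{K}\in\{\mathbb{R},\mathbb{C}\}$. For each $n\in\mathbb{N}$ with $n\ge2$ there exists a constant $B_n>0$ such that for each $f\in\mathcal P_{\boldsymbol\lambda,D,\mathbb{K}}$ and $\epsilon>0$: (i) if $\mathbb{K}=\mathbb{R}$, there exist ReLU neural networks $\Phi_{f,n,D,\epsilon}\in\mathcal{NN}_{L,13,1,1}$ with \[ L\le B_n\Big(B_n\epsilon^{-\frac2{n-1}}+\epsilon^{-\frac1{n-1}}\log\tfrac2\epsilon+\epsilon^{-\frac1{n-1}}\log D+\epsilon^{-\frac1{n-1}}\log\lambda_n\Big)\quad\text{as }\epsilon\to0 \] such that $\|f-\Phi_{f,n,D,\epsilon}\|_{L^\infty((-D,D))}\le\epsilon$; (ii) if $\mathbb{K}=\mathbb{C}$, there exist ReLU neural networks $\Phi_{f,n,D,\epsilon}\in\mathcal{NN}_{L,15,1,2}$ with $L$ bounded as in (i) such that $\|f-((\Phi_{f,n,D,\epsilon})_1+\imath(\Phi_{f,n,D,\epsilon})_2)\|_{L^\infty((-D,D))}\le\epsilon$. In either case $B_n\le C\max\{n+2,\,4(\widetilde C_nD^{n+1}\lambda_{n+1})^{\frac1{n-1}}\}$ for a constant $C>0$ and a constant $\widetilde C_n>0$ independent of $\boldsymbol\lambda$, and all weights of $\Phi_{f,n,D,\epsilon}$ are bounded in absolute value by $\max\{2,\lambda_n\}$.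
   Context: $\mathcal P_{\boldsymbol\lambda,D,\mathbb{K}}=\{f\in\mathscr C^\infty([-D,D],\mathbb{K}):\ \|f^{(m)}\|_{L^\infty((-D,D))}\le\lambda_m\ \text{for each }m\in\mathbb{N}_0\}$. ReLU networks: $\varrho(x)=\max\{x,0\}$ componentwise; $\mathcal{NN}_{L,M,\ell_0,\ell_L}$ is the set of maps $\mathbb{R}^{\ell_0}\to\mathbb{R}^{\ell_L}$ of the form $\mathcal A_{L'}\circ\varrho\circ\cdots\circ\varrho\circ\mathcal A_1$ (or $\mathcal A_1$), affine $\mathcal A_k(\mathbf x)=\mathbf W_k\mathbf x+\mathbf b_k$, depth $L'\le L$, width $\max_k\ell_k\le M$; weights are the entries of $\mathbf W_k,\mathbf b_k$. $(\Phi)_1,(\Phi)_2$ denote the outputs. *)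

theory Defs
  imports "HOL-Analysis.Analysis"
begin

text \<open>A network is given by a list of layer widths ds = [l_0, ..., l_L] and a list of
  L affine layers (W_k, b_k); W_k is a list of l_k rows, each of length l_(k-1),
  and b_k has length l_k.\<close>

type_synonym layer = "real list list \<times> real list"

definition relu :: "real \<Rightarrow> real" where
  "relu x = max x 0"

definition affine :: "layer \<Rightarrow> real list \<Rightarrow> real list" where
  "affine l x = map (\<lambda>(row, bi). (\<Sum>(w, xi) \<leftarrow> zip row x. w * xi) + bi) (zip (fst l) (snd l))"

fun realize :: "layer list \<Rightarrow> real list \<Rightarrow> real list" where
  "realize [] x = x"
| "realize [l] x = affine l x"
| "realize (l # ls) x = realize ls (map relu (affine l x))"

definition valid_net :: "nat list \<Rightarrow> layer list \<Rightarrow> bool" where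
  "valid_net ds ls \<longleftrightarrow> ls \<noteq> [] \<and> length ds = Suc (length ls) \<and>
     (\<forall>k < length ls. length (fst (ls ! k)) = ds ! Suc k \<and>
                      length (snd (ls ! k)) = ds ! Suc k \<and>
                      (\<forall>row \<in> set (fst (ls ! k)). length row = ds ! k))"

text \<open>Membership in NN_{L,M,l0,lL}: depth at most L, width (max of all l_k) at most M.\<close>
definition in_NN :: "real \<Rightarrow> nat \<Rightarrow> nat \<Rightarrow> nat \<Rightarrow> nat list \<Rightarrow> layer list \<Rightarrow> bool" where
  "in_NN L M l0 lL ds ls \<longleftrightarrow> valid_net ds ls \<and> hd ds = l0 \<and> last ds = lL \<and>
     real (length ls) \<le> L \<and> (\<forall>d \<in> set ds. d \<le> M)"

definition weights_bounded :: "layer list \<Rightarrow> real \<Rightarrow> bool" where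
  "weights_bounded ls c \<longleftrightarrow>
     (\<forall>l \<in> set ls. (\<forall>row \<in> set (fst l). \<forall>w \<in> set row. \<bar>w\<bar> \<le> c) \<and> (\<forall>v \<in> set (snd l). \<bar>v\<bar> \<le> c))"

text \<open>f is C^infinity on [-D,D] (one-sided derivatives at the endpoints), with derivatives
  F m, and sup-norm of the m-th derivative on (-D,D) at most lam m.\<close>
definition in_P :: "(nat \<Rightarrow> real) \<Rightarrow> real \<Rightarrow> (real \<Rightarrow> 'a::real_normed_vector) \<Rightarrow> bool" where
  "in_P lam D f \<longleftrightarrow> (\<exists>F :: nat \<Rightarrow> real \<Rightarrow> 'a.
     (\<forall>x \<in> {-D..D}. F 0 x = f x) \<and>
     (\<forall>m. \<forall>x \<in> {-D..D}. (F m has_vector_derivative F (Suc m) x) (at x within {-D..D})) \<and>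
     (\<forall>m. \<forall>x \<in> {-D<..<D}. norm (F m x) \<le> lam m))"

definition depth_bound :: "real \<Rightarrow> nat \<Rightarrow> real \<Rightarrow> (nat \<Rightarrow> real) \<Rightarrow> real \<Rightarrow> real" where
  "depth_bound B n D lam \<epsilon> =
     B * (B * \<epsilon> powr (-2 / (real n - 1))
          + \<epsilon> powr (-1 / (real n - 1)) * ln (2 / \<epsilon>)
          + \<epsilon> powr (-1 / (real n - 1)) * ln D
          + \<epsilon> powr (-1 / (real n - 1)) * ln (lam n))"

definition B_bound :: "real \<Rightarrow> real \<Rightarrow> nat \<Rightarrow> real \<Rightarrow> (nat \<Rightarrow> real) \<Rightarrow> real" where
  "B_bound C Ct n D lam = C * max (real n + 2) (4 * (Ct * D ^ (n + 1) * lam (n + 1)) powr (1 / (real n - 1)))"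

end

theory Submission
  imports Defs
begin

type_synonym neuron = "(nat \<times> real) list \<times> real"

definition nev :: "neuron \<Rightarrow> (nat \<Rightarrow> real) \<Rightarrow> real" where
  "nev nr s = (\<Sum>(i,w)\<leftarrow>fst nr. w * s i) + snd nr"

definition lsem :: "(nat \<times> neuron) list \<Rightarrow> (nat \<Rightarrow> real) \<Rightarrow> (nat \<Rightarrow> real)" where
  "lsem L s = (\<lambda>k. case map_of L k of Some nr \<Rightarrow> relu (nev nr s) | None \<Rightarrow> s k)"

definition psem :: "(nat \<times> neuron) list list \<Rightarrow> (nat \<Rightarrow> real) \<Rightarrow> (nat \<Rightarrow> real)" where
  "psem Ls s = fold lsem Ls s"

lemma lsem_Nil[simp]: "lsem [] s = s"
  by (simp add: lsem_def)

lemma lsem_Cons[simp]: "lsem ((k,nr)#L) s = (lsem L s)(k := relu (nev nr s))"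
  by (rule ext) (simp add: lsem_def)

lemma psem_Nil[simp]: "psem [] s = s" by (simp add: psem_def)
lemma psem_Cons[simp]: "psem (L#Ls) s = psem Ls (lsem L s)" by (simp add: psem_def)
lemma psem_append[simp]: "psem (Ls @ Ms) s = psem Ms (psem Ls s)" by (simp add: psem_def)

lemma nev_simps[simp]: "nev ([], b) s = b" "nev ((i,w)#ws, b) s = w * s i + nev (ws, b) s"
  by (simp_all add: nev_def)

lemma relu_id[simp]: "0 \<le> x \<Longrightarrow> relu x = x" by (simp add: relu_def)
lemma relu_nonneg[simp]: "0 \<le> relu x" by (simp add: relu_def)

definition nonneg :: "(nat \<Rightarrow> real) \<Rightarrow> bool" where
  "nonneg s \<longleftrightarrow> (\<forall>k<13. 0 \<le> s k)"

lemma lsem_nonneg: "nonneg s \<Longrightarrow> nonneg (lsem L s)"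
  by (auto simp: nonneg_def lsem_def split: option.split)

lemma psem_nonneg: "nonneg s \<Longrightarrow> nonneg (psem Ls s)"
  by (induction Ls arbitrary: s) (auto simp: lsem_nonneg)

definition keys :: "(nat \<times> neuron) list list \<Rightarrow> nat set" where
  "keys Ls = (\<Union>L\<in>set Ls. fst ` set L)"

lemma lsem_frame: "k \<notin> fst ` set L \<Longrightarrow> lsem L s k = s k"
proof -
  assume "k \<notin> fst ` set L"
  then have "map_of L k = None" by (simp add: map_of_eq_None_iff)
  then show ?thesis by (simp add: lsem_def)
qed

lemma psem_frame: "k \<notin> keys Ls \<Longrightarrow> psem Ls s k = s k"
  by (induction Ls arbitrary: s) (auto simp: keys_def lsem_frame)

definition wt :: "(nat \<times> real) list \<Rightarrow> nat \<Rightarrow> real" where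
  "wt ws j = (\<Sum>(i,w)\<leftarrow>ws. if i = j then w else 0)"

definition drow :: "nat \<Rightarrow> (nat \<times> real) list \<Rightarrow> real list" where
  "drow W ws = map (wt ws) [0..<W]"

definition carries :: "(nat \<times> neuron) list" where
  "carries = map (\<lambda>i. (i, ([(i,1)], 0))) [0..<13]"

definition nfun :: "(nat \<times> neuron) list \<Rightarrow> nat \<Rightarrow> neuron" where
  "nfun L k = (case map_of (L @ carries) k of Some nr \<Rightarrow> nr | None \<Rightarrow> ([], 0))"

definition player :: "nat \<Rightarrow> (nat \<times> neuron) list \<Rightarrow> layer" where
  "player W L = (map (\<lambda>k. drow W (fst (nfun L k))) [0..<13], map (\<lambda>k. snd (nfun L k)) [0..<13])"

lemma sum_list_zip_map:
  "(\<Sum>(w,xi)\<leftarrow>zip (map f xs) (map g xs). w * xi) = (\<Sum>j\<leftarrow>xs. f j * g j)"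
  by (induction xs) auto

lemma wt_Cons: "wt ((i,w)#ws) j = (if i = j then w else 0) + wt ws j"
  by (simp add: wt_def)

lemma dense_sum:
  "(\<Sum>(w,xi)\<leftarrow>zip (drow W ws) (map s [0..<W]). w * xi) = (\<Sum>(i,w)\<leftarrow>ws. if i < W then w * s i else 0)"
proof (induction ws)
  case Nil
  then show ?case by (simp add: drow_def sum_list_zip_map wt_def sum_list_sum_nth)
next
  case (Cons a ws)
  obtain i w where a: "a = (i,w)" by force
  have "(\<Sum>(w',xi)\<leftarrow>zip (drow W (a#ws)) (map s [0..<W]). w' * xi)
      = (\<Sum>j\<leftarrow>[0..<W]. (if i = j then w else 0) * s j + wt ws j * s j)"
    by (simp add: drow_def sum_list_zip_map a wt_Cons algebra_simps)
  also have "\<dots> = (\<Sum>j\<leftarrow>[0..<W]. (if i = j then w else 0) * s j) + (\<Sum>j\<leftarrow>[0..<W]. wt ws j * s j)"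
    by (simp add: sum_list_addf)
  also have "(\<Sum>j\<leftarrow>[0..<W]. wt ws j * s j) = (\<Sum>(w,xi)\<leftarrow>zip (drow W ws) (map s [0..<W]). w * xi)"
    by (simp add: drow_def sum_list_zip_map)
  also have "(\<Sum>j\<leftarrow>[0..<W]. (if i = j then w else 0) * s j) = (if i < W then w * s i else 0)"
    by (simp add: sum_list_distinct_conv_sum_set if_distrib[of "\<lambda>x. x * _"] cong: if_cong)
  finally show ?case using Cons by (simp add: a)
qed

definition wfL :: "(nat \<times> neuron) list \<Rightarrow> bool" where
  "wfL L \<longleftrightarrow> (\<forall>(k,nr)\<in>set L. \<forall>(i,w)\<in>set (fst nr). i < 13)"

lemma map_of_map_self: "map_of (map (\<lambda>i. (i, f i)) xs) k = (if k \<in> set xs then Some (f k) else None)"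
  by (induction xs) auto

lemma nfun_eq: "k < 13 \<Longrightarrow> nfun L k = (case map_of L k of Some nr \<Rightarrow> nr | None \<Rightarrow> ([(k,1)], 0))"
  by (simp add: nfun_def carries_def map_add_def map_of_map_self split: option.split)

lemma zip_self: "zip xs xs = map (\<lambda>x. (x,x)) xs"
  by (induction xs) auto

lemma affine_player:
  "affine (player W L) (map s [0..<W]) =
     map (\<lambda>k. (\<Sum>(i,w)\<leftarrow>fst (nfun L k). if i < W then w * s i else 0) + snd (nfun L k)) [0..<13]"
proof -
  have "affine (player W L) (map s [0..<W]) =
     map (\<lambda>k. (\<Sum>(w,xi)\<leftarrow>zip (drow W (fst (nfun L k))) (map s [0..<W]). w * xi) + snd (nfun L k)) [0..<13]"
    by (simp add: affine_def player_def zip_map_map zip_self)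
  then show ?thesis by (simp only: dense_sum)
qed

lemma nev_if: "(\<forall>(i,w)\<in>set ws. i < W) \<Longrightarrow>
   (\<Sum>(i,w)\<leftarrow>ws. if i < W then w * s i else 0) = (\<Sum>(i,w)\<leftarrow>ws. w * s i)"
  by (induction ws) auto

lemma hidden_layer:
  assumes "wfL L" "nonneg s"
  shows "map relu (affine (player 13 L) (map s [0..<13])) = map (lsem L s) [0..<13]"
proof -
  have "relu ((\<Sum>(i,w)\<leftarrow>fst (nfun L k). if i < 13 then w * s i else 0) + snd (nfun L k)) = lsem L s k"
    if k: "k < 13" for k
  proof (cases "map_of L k")
    case None
    then show ?thesis using k assms(2) by (simp add: nfun_eq lsem_def nonneg_def)
  next
    case (Some nr)
    then have "(k,nr) \<in> set L" by (rule map_of_SomeD)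
    then have "\<forall>(i,w)\<in>set (fst nr). i < 13" using assms(1) by (auto simp: wfL_def)
    then show ?thesis using k Some by (simp add: nfun_eq lsem_def nev_if nev_def)
  qed
  then show ?thesis by (simp add: affine_player)
qed

definition hchain :: "layer list \<Rightarrow> real list \<Rightarrow> real list" where
  "hchain ls v = fold (\<lambda>l v. map relu (affine l v)) ls v"

lemma realize_append_out: "realize (ls @ [out]) v = affine out (hchain ls v)"
proof (induction ls arbitrary: v)
  case Nil
  then show ?case by (simp add: hchain_def)
next
  case (Cons l ls)
  obtain a b where "ls @ [out] = a # b" by (cases "ls @ [out]") auto
  then have "realize ((l # ls) @ [out]) v = realize (ls @ [out]) (map relu (affine l v))"
    by simp
  then show ?case using Cons by (simp add: hchain_def)
qed

lemma hchain_psem: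
  assumes "\<forall>L\<in>set Ls. wfL L" "nonneg s"
  shows "hchain (map (player 13) Ls) (map s [0..<13]) = map (psem Ls s) [0..<13]"
  using assms
proof (induction Ls arbitrary: s)
  case Nil
  then show ?case by (simp add: hchain_def)
next
  case (Cons L Ls)
  have "hchain (map (player 13) (L # Ls)) (map s [0..<13]) =
        hchain (map (player 13) Ls) (map relu (affine (player 13 L) (map s [0..<13])))"
    by (simp add: hchain_def)
  also have "\<dots> = hchain (map (player 13) Ls) (map (lsem L s) [0..<13])"
    using Cons.prems by (simp add: hidden_layer)
  also have "\<dots> = map (psem Ls (lsem L s)) [0..<13]"
    using Cons.prems by (intro Cons.IH) (auto simp: lsem_nonneg)
  finally show ?case by simp
qed

definition sin0 :: "real \<Rightarrow> nat \<Rightarrow> real" where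
  "sin0 x = (\<lambda>i. if i = 0 then x else 0)"

lemma first_layer:
  "map relu (affine (player 1 L0) [x]) = map (\<lambda>k. relu (nev (nfun L0 k) (sin0 x))) [0..<13]"
proof -
  have "[x] = map (sin0 x) [0..<1]" by (simp add: sin0_def)
  moreover have "(\<Sum>(i,w)\<leftarrow>ws. if i < 1 then w * sin0 x i else 0) = (\<Sum>(i,w)\<leftarrow>ws. w * sin0 x i)" for ws
    by (induction ws) (auto simp: sin0_def)
  ultimately have "affine (player 1 L0) [x] = map (\<lambda>k. (\<Sum>(i,w)\<leftarrow>fst (nfun L0 k). w * sin0 x i) + snd (nfun L0 k)) [0..<13]"
    using affine_player[of 1 L0 "sin0 x"] by simp
  then show ?thesis by (simp add: nev_def)
qed

definition pout :: "neuron list \<Rightarrow> layer" where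
  "pout outs = (map (\<lambda>nr. drow 13 (fst nr)) outs, map snd outs)"

lemma affine_pout:
  assumes "\<forall>nr\<in>set outs. \<forall>(i,w)\<in>set (fst nr). i < 13"
  shows "affine (pout outs) (map s [0..<13]) = map (\<lambda>nr. nev nr s) outs"
proof -
  have "affine (pout outs) (map s [0..<13]) =
     map (\<lambda>nr. (\<Sum>(w,xi)\<leftarrow>zip (drow 13 (fst nr)) (map s [0..<13]). w * xi) + snd nr) outs"
    by (simp add: affine_def pout_def zip_map_map zip_self)
  also have "\<dots> = map (\<lambda>nr. nev nr s) outs"
    using assms by (auto simp only: dense_sum nev_def nev_if intro!: map_cong)
  finally show ?thesis .
qed

definition fullnet :: "(nat \<times> neuron) list \<Rightarrow> (nat \<times> neuron) list list \<Rightarrow> neuron list \<Rightarrow> layer list" where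
  "fullnet L0 Ls outs = player 1 L0 # map (player 13) Ls @ [pout outs]"

definition fullds :: "(nat \<times> neuron) list list \<Rightarrow> nat \<Rightarrow> nat list" where
  "fullds Ls od = 1 # replicate (Suc (length Ls)) 13 @ [od]"

lemma valid_fullnet:
  assumes "outs \<noteq> []"
  shows "valid_net (fullds Ls (length outs)) (fullnet L0 Ls outs)"
  unfolding valid_net_def
proof (intro conjI allI impI)
  show "fullnet L0 Ls outs \<noteq> []" by (simp add: fullnet_def)
  show "length (fullds Ls (length outs)) = Suc (length (fullnet L0 Ls outs))"
    by (simp add: fullnet_def fullds_def)
  fix k assume k: "k < length (fullnet L0 Ls outs)"
  then have k': "k \<le> Suc (length Ls)" by (simp add: fullnet_def)
  consider "k = 0" | "0 < k" "k \<le> length Ls" | "k = Suc (length Ls)" using k' by linarith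
  then have "length (fst (fullnet L0 Ls outs ! k)) = fullds Ls (length outs) ! Suc k \<and>
        length (snd (fullnet L0 Ls outs ! k)) = fullds Ls (length outs) ! Suc k \<and>
        (\<forall>row\<in>set (fst (fullnet L0 Ls outs ! k)). length row = fullds Ls (length outs) ! k)"
  proof cases
    case 1
    then show ?thesis by (auto simp: fullnet_def fullds_def player_def drow_def)
  next
    case 2
    then obtain k0 where k0: "k = Suc k0" "k0 < length Ls" by (cases k) auto
    then show ?thesis
      by (auto simp: fullnet_def fullds_def player_def drow_def nth_append nth_Cons')
  next
    case 3
    then show ?thesis
      by (auto simp: fullnet_def fullds_def pout_def drow_def nth_append nth_Cons')
  qed
  then show "length (fst (fullnet L0 Ls outs ! k)) = fullds Ls (length outs) ! Suc k"
        "length (snd (fullnet L0 Ls outs ! k)) = fullds Ls (length outs) ! Suc k"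
        "\<forall>row\<in>set (fst (fullnet L0 Ls outs ! k)). length row = fullds Ls (length outs) ! k"
    by auto
qed

definition nok :: "real \<Rightarrow> neuron \<Rightarrow> bool" where
  "nok c nr \<longleftrightarrow> distinct (map fst (fst nr)) \<and> (\<forall>(i,w)\<in>set (fst nr). \<bar>w\<bar> \<le> c \<and> i < 13) \<and> \<bar>snd nr\<bar> \<le> c"

definition Lok :: "real \<Rightarrow> (nat \<times> neuron) list \<Rightarrow> bool" where
  "Lok c L \<longleftrightarrow> (\<forall>(k,nr)\<in>set L. nok c nr)"

lemma wt_notin: "j \<notin> fst ` set ws \<Longrightarrow> wt ws j = 0"
  by (induction ws) (auto simp: wt_def)

lemma wt_bound: "distinct (map fst ws) \<Longrightarrow> \<forall>(i,w)\<in>set ws. \<bar>w\<bar> \<le> c \<Longrightarrow> 0 \<le> c \<Longrightarrow> \<bar>wt ws j\<bar> \<le> c"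
proof (induction ws)
  case Nil
  then show ?case by (simp add: wt_def)
next
  case (Cons a ws)
  obtain i w where a: "a = (i,w)" by force
  show ?case
  proof (cases "i = j")
    case True
    then have "wt ws j = 0" using Cons.prems by (intro wt_notin) (auto simp: a)
    then show ?thesis using Cons.prems True by (simp add: a wt_Cons)
  next
    case False
    then show ?thesis using Cons by (simp add: a wt_Cons)
  qed
qed

lemma Lok_wfL: "Lok c L \<Longrightarrow> wfL L"
  by (auto simp: Lok_def wfL_def nok_def)

lemma nfun_nok:
  assumes "Lok c L" "1 \<le> c"
  shows "nok c (nfun L k)"
proof -
  have "nok c nr" if "map_of (L @ carries) k = Some nr" for nr
  proof -
    from that have "(k,nr) \<in> set (L @ carries)" by (rule map_of_SomeD)
    then show ?thesis using assms by (auto simp: Lok_def carries_def nok_def)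
  qed
  moreover have "nok c ([],0)" using assms by (simp add: nok_def)
  ultimately show ?thesis by (simp add: nfun_def split: option.split)
qed

lemma player_bounded:
  assumes "Lok c L" "1 \<le> c"
  shows "(\<forall>row \<in> set (fst (player W L)). \<forall>w \<in> set row. \<bar>w\<bar> \<le> c) \<and> (\<forall>v \<in> set (snd (player W L)). \<bar>v\<bar> \<le> c)"
proof -
  have "nok c (nfun L k)" for k using nfun_nok[OF assms] .
  then show ?thesis using assms(2)
    by (fastforce simp: player_def drow_def nok_def intro!: wt_bound)
qed

lemma pout_bounded:
  assumes "\<forall>nr\<in>set outs. nok c nr" "0 \<le> c"
  shows "(\<forall>row \<in> set (fst (pout outs)). \<forall>w \<in> set row. \<bar>w\<bar> \<le> c) \<and> (\<forall>v \<in> set (snd (pout outs)). \<bar>v\<bar> \<le> c)"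
  using assms by (fastforce simp: pout_def drow_def nok_def intro!: wt_bound)

lemma fullnet_bounded:
  assumes "Lok c L0" "\<forall>L\<in>set Ls. Lok c L" "\<forall>nr\<in>set outs. nok c nr" "1 \<le> c"
  shows "weights_bounded (fullnet L0 Ls outs) c"
  unfolding weights_bounded_def
proof
  fix l assume "l \<in> set (fullnet L0 Ls outs)"
  then consider "l = player 1 L0" | L where "L \<in> set Ls" "l = player 13 L" | "l = pout outs"
    by (auto simp: fullnet_def)
  then show "(\<forall>row\<in>set (fst l). \<forall>w\<in>set row. \<bar>w\<bar> \<le> c) \<and> (\<forall>v\<in>set (snd l). \<bar>v\<bar> \<le> c)"
  proof cases
    case 1 then show ?thesis using player_bounded assms by blast
  next
    case 2 then show ?thesis using player_bounded assms by blast
  next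
    case 3 then show ?thesis using pout_bounded assms by force
  qed
qed


definition tent :: "real \<Rightarrow> real" where
  "tent z = 2 * relu z - 2 * relu (2 * z - 1)"

definition hh :: "real \<Rightarrow> real" where
  "hh u = u - u^2"

definition sqa :: "nat \<Rightarrow> real \<Rightarrow> real" where
  "sqa m w = w^2 + hh ((tent ^^ m) w) / 4^m"

lemma tent_lo: "0 \<le> z \<Longrightarrow> z \<le> 1/2 \<Longrightarrow> tent z = 2 * z"
  by (simp add: tent_def relu_def)

lemma tent_hi: "1/2 \<le> z \<Longrightarrow> tent z = 2 - 2 * z"
  by (simp add: tent_def relu_def)

lemma tent_range: "0 \<le> z \<Longrightarrow> z \<le> 1 \<Longrightarrow> 0 \<le> tent z \<and> tent z \<le> 1"
  by (cases "z \<le> 1/2") (simp_all add: tent_lo tent_hi)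

lemma tentpow_range: "0 \<le> z \<Longrightarrow> z \<le> 1 \<Longrightarrow> 0 \<le> (tent ^^ m) z \<and> (tent ^^ m) z \<le> 1"
  by (induction m) (auto simp: tent_range)

lemma hh_tent: "0 \<le> z \<Longrightarrow> z \<le> 1 \<Longrightarrow> hh z - tent z / 4 = hh (tent z) / 4"
  by (cases "z \<le> 1/2") (simp_all add: tent_lo tent_hi hh_def power2_eq_square field_simps)

lemma hh_range: "0 \<le> z \<Longrightarrow> z \<le> 1 \<Longrightarrow> 0 \<le> hh z \<and> hh z \<le> 1/4"
proof -
  assume "0 \<le> z" "z \<le> 1"
  moreover have "(z - 1/2)^2 \<ge> 0" by simp
  moreover have "z*z \<le> z*1" using \<open>0 \<le> z\<close> \<open>z \<le> 1\<close> by (rule mult_left_mono[rotated])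
  ultimately show ?thesis by (auto simp: hh_def power2_eq_square algebra_simps)
qed

lemma sqa_0[simp]: "sqa 0 w = w" by (simp add: sqa_def hh_def)

lemma sqa_Suc: "0 \<le> w \<Longrightarrow> w \<le> 1 \<Longrightarrow> sqa q w - tent ((tent ^^ q) w) / 4^(Suc q) = sqa (Suc q) w"
proof -
  assume w: "0 \<le> w" "w \<le> 1"
  let ?z = "(tent ^^ q) w"
  have z: "0 \<le> ?z" "?z \<le> 1" using tentpow_range[OF w] by auto
  have "sqa q w - tent ?z / 4^(Suc q) = w^2 + (hh ?z - tent ?z / 4) / 4^q"
    by (simp add: sqa_def field_simps)
  also have "\<dots> = w^2 + (hh (tent ?z) / 4) / 4^q" by (subst hh_tent[OF z]) (rule refl)
  also have "\<dots> = w^2 + hh (tent ?z) / 4^(Suc q)" by simp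
  finally show ?thesis by (simp add: sqa_def)
qed

lemma sqa_bounds: "0 \<le> w \<Longrightarrow> w \<le> 1 \<Longrightarrow> w^2 \<le> sqa m w \<and> sqa m w \<le> w^2 + 1 / 4^(Suc m)"
proof -
  assume w: "0 \<le> w" "w \<le> 1"
  have h: "0 \<le> hh ((tent ^^ m) w) \<and> hh ((tent ^^ m) w) \<le> 1/4" using hh_range tentpow_range[OF w] by blast
  then have "hh ((tent ^^ m) w) / 4^m \<le> (1/4) / 4^m" by (intro divide_right_mono) auto
  then show ?thesis using h by (auto simp: sqa_def)
qed

definition SA :: "(nat \<times> neuron) list" where
  "SA = [(8, ([(8,1)],0)), (9, ([(8,2)],-1)), (11, ([(11,1)],0)), (12, ([(11,2)],-1))]"

definition SB :: "nat \<Rightarrow> (nat \<times> neuron) list" where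
  "SB q = [(8, ([(8,2),(9,-2)],0)), (9, ([],0)),
           (10, ([(10,1),(8,-(2/4^(Suc q))),(9, 2/4^(Suc q))],0)),
           (11, ([(11,2),(12,-2)],0)), (12, ([],0)),
           (3, ([(3,1),(11,-(2/4^(Suc q))),(12,2/4^(Suc q))],0))]"

definition saw :: "nat \<Rightarrow> (nat \<times> neuron) list list" where
  "saw q = [SA, SB q]"

lemma tent_relu: "0 \<le> z \<Longrightarrow> z \<le> 1 \<Longrightarrow> relu (2 * z - 2 * relu (2 * z - 1)) = tent z"
  using tent_range[of z] by (simp add: tent_def)

lemma saw_step:
  assumes s: "nonneg s" and w: "0 \<le> w1" "w1 \<le> 1" "0 \<le> w2" "w2 \<le> 1"
    and v: "s 8 = (tent ^^ q) w1" "s 10 = sqa q w1" "s 11 = (tent ^^ q) w2" "s 3 = sqa q w2"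
  shows "psem (saw q) s 8 = (tent ^^ Suc q) w1 \<and> psem (saw q) s 10 = sqa (Suc q) w1 \<and>
         psem (saw q) s 11 = (tent ^^ Suc q) w2 \<and> psem (saw q) s 3 = sqa (Suc q) w2"
proof -
  let ?z1 = "(tent ^^ q) w1" and ?z2 = "(tent ^^ q) w2"
  have z1: "0 \<le> ?z1" "?z1 \<le> 1" using tentpow_range[of w1 q] w by auto
  have z2: "0 \<le> ?z2" "?z2 \<le> 1" using tentpow_range[of w2 q] w by auto
  have "0 \<le> sqa (Suc q) w1" using sqa_bounds[of w1 "Suc q"] w by (meson order_trans zero_le_power2)
  then have e1: "relu (sqa q w1 - tent ?z1 / 4^(Suc q)) = sqa (Suc q) w1"
    using sqa_Suc[of w1 q] w by simp
  have "0 \<le> sqa (Suc q) w2" using sqa_bounds[of w2 "Suc q"] w by (meson order_trans zero_le_power2)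
  then have e2: "relu (sqa q w2 - tent ?z2 / 4^(Suc q)) = sqa (Suc q) w2"
    using sqa_Suc[of w2 q] w by simp
  have t1: "tent ?z1 = 2 * ?z1 - 2 * relu (2 * ?z1 - 1)" using z1 by (simp add: tent_def)
  have t2: "tent ?z2 = 2 * ?z2 - 2 * relu (2 * ?z2 - 1)" using z2 by (simp add: tent_def)
  have a1: "sqa q w1 - tent ?z1 / 4^(Suc q) = 1 * sqa q w1 + (-(2/4^(Suc q)) * ?z1 + (2/4^(Suc q)) * relu (2 * ?z1 + -1))"
    by (simp add: t1 field_simps)
  have a2: "sqa q w2 - tent ?z2 / 4^(Suc q) = 1 * sqa q w2 + (-(2/4^(Suc q)) * ?z2 + (2/4^(Suc q)) * relu (2 * ?z2 + -1))"
    by (simp add: t2 field_simps)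
  have k1: "sqa q w1 + (relu (2 * ?z1 - 1) / (2 * 4 ^ q) - ?z1 / (2 * 4 ^ q)) = sqa q w1 - tent ?z1 / 4^(Suc q)"
    using z1 by (simp add: tent_def field_simps)
  have k2: "sqa q w2 + (relu (2 * ?z2 - 1) / (2 * 4 ^ q) - ?z2 / (2 * 4 ^ q)) = sqa q w2 - tent ?z2 / 4^(Suc q)"
    using z2 by (simp add: tent_def field_simps)
  show ?thesis
    using z1 z2 e1 e2 tent_relu[of ?z1] tent_relu[of ?z2] k1 k2
    by (simp add: saw_def SA_def SB_def v)
qed

definition saws :: "nat \<Rightarrow> (nat \<times> neuron) list list" where
  "saws m = concat (map saw [0..<m])"

lemma keys_append[simp]: "keys (Ls @ Ms) = keys Ls \<union> keys Ms"
  by (auto simp: keys_def)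
lemma keys_Cons[simp]: "keys (L # Ls) = fst ` set L \<union> keys Ls"
  by (auto simp: keys_def)
lemma keys_Nil[simp]: "keys [] = {}"
  by (auto simp: keys_def)

lemma keys_saws: "keys (saws m) \<subseteq> {3,8,9,10,11,12}"
  by (induction m) (auto simp: saws_def saw_def SA_def SB_def)

lemma saws_sem:
  assumes s: "nonneg s" and w: "0 \<le> w1" "w1 \<le> 1" "0 \<le> w2" "w2 \<le> 1"
    and v: "s 8 = w1" "s 10 = w1" "s 11 = w2" "s 3 = w2"
  shows "psem (saws m) s 8 = (tent ^^ m) w1 \<and> psem (saws m) s 10 = sqa m w1 \<and>
         psem (saws m) s 11 = (tent ^^ m) w2 \<and> psem (saws m) s 3 = sqa m w2"
proof (induction m)
  case 0
  then show ?case using v by (simp add: saws_def)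
next
  case (Suc m)
  have "saws (Suc m) = saws m @ saw m" by (simp add: saws_def)
  then show ?case
    using saw_step[OF psem_nonneg[OF s] w] Suc by simp
qed

definition pm :: "nat \<Rightarrow> real \<Rightarrow> real \<Rightarrow> real" where
  "pm m t p = min 1 (relu (sqa m ((t + p) / 2) - sqa m (\<bar>t - p\<bar> / 2)))"

definition M0 :: "(nat \<times> neuron) list" where
  "M0 = [(8, ([(2,1/2),(3,1/2)],0)), (10, ([(2,1/2),(3,1/2)],0)),
         (11, ([(2,1/2),(3,-1/2)],0)), (12, ([(2,-1/2),(3,1/2)],0))]"

definition M1 :: "(nat \<times> neuron) list" where
  "M1 = [(11, ([(11,1),(12,1)],0)), (3, ([(11,1),(12,1)],0)), (12, ([],0))]"

definition C1 :: "(nat \<times> neuron) list" where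
  "C1 = [(3, ([(10,1),(3,-1)],0))]"

definition C2 :: "(nat \<times> neuron) list" where
  "C2 = [(3, ([(3,-1)],1))]"

definition C3 :: "nat \<Rightarrow> real \<Rightarrow> (nat \<times> neuron) list" where
  "C3 acc dd = [(3, ([(3,-1)],1)), (acc, ([(acc,1),(3,-(max dd 0))], max dd 0)),
                (Suc acc, ([(Suc acc,1),(3,-(max (-dd) 0))], max (-dd) 0))]"

definition mulg :: "nat \<Rightarrow> nat \<Rightarrow> real \<Rightarrow> (nat \<times> neuron) list list" where
  "mulg m acc dd = [M0, M1] @ saws m @ [C1, C2, C3 acc dd]"

lemma keys_mulg: "keys (mulg m acc dd) \<subseteq> {3,8,9,10,11,12,acc,Suc acc}"
  using keys_saws[of m] by (auto simp: mulg_def M0_def M1_def C1_def C2_def C3_def)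

lemma relu_abs: "relu x + relu (- x) = \<bar>x\<bar>"
  by (simp add: relu_def)

lemma mulg_sem:
  assumes s: "nonneg s" and acc: "acc = 4 \<or> acc = 6"
    and tp: "0 \<le> t" "t \<le> 1" "0 \<le> p" "p \<le> 1" and v: "s 2 = t" "s 3 = p"
  shows "psem (mulg m acc dd) s 3 = pm m t p \<and>
         psem (mulg m acc dd) s acc = s acc + max dd 0 * pm m t p \<and>
         psem (mulg m acc dd) s (Suc acc) = s (Suc acc) + max (-dd) 0 * pm m t p"
proof -
  define s1 where "s1 = psem [M0, M1] s"
  have n1: "nonneg s1" unfolding s1_def by (rule psem_nonneg[OF s])
  have ab: "relu (t / 2 - p / 2) + relu (p / 2 - t / 2) = \<bar>t - p\<bar> / 2"
    by (auto simp: relu_def abs_if max_def)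
  have s1v: "s1 8 = (t+p)/2" "s1 10 = (t+p)/2" "s1 11 = \<bar>t - p\<bar>/2" "s1 3 = \<bar>t - p\<bar>/2"
    using tp ab by (simp_all add: s1_def M0_def M1_def v add_divide_distrib)
  have s1a: "s1 acc = s acc" "s1 (Suc acc) = s (Suc acc)"
    using acc by (auto simp: s1_def M0_def M1_def)
  define s2 where "s2 = psem (saws m) s1"
  have n2: "nonneg s2" unfolding s2_def by (rule psem_nonneg[OF n1])
  have w: "0 \<le> (t+p)/2" "(t+p)/2 \<le> 1" "0 \<le> \<bar>t - p\<bar>/2" "\<bar>t - p\<bar>/2 \<le> 1" using tp by auto
  have s2v: "s2 10 = sqa m ((t+p)/2)" "s2 3 = sqa m (\<bar>t - p\<bar>/2)"
    using saws_sem[OF n1 w s1v] by (auto simp: s2_def)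
  have s2a: "s2 acc = s acc" "s2 (Suc acc) = s (Suc acc)"
  proof -
    have "acc \<notin> keys (saws m)" "Suc acc \<notin> keys (saws m)" using acc keys_saws[of m] by auto
    then show "s2 acc = s acc" "s2 (Suc acc) = s (Suc acc)" using s1a by (simp_all add: s2_def psem_frame)
  qed
  have "mulg m acc dd = [M0, M1] @ saws m @ [C1, C2, C3 acc dd]" by (simp add: mulg_def)
  then have eq: "psem (mulg m acc dd) s = psem [C1, C2, C3 acc dd] s2"
    by (simp add: s1_def s2_def)
  define r where "r = relu (sqa m ((t + p) / 2) - sqa m (\<bar>t - p\<bar> / 2))"
  have r0: "0 \<le> r" by (simp add: r_def)
  have r_alt: "relu (sqa m ((p + t) / 2) - sqa m (\<bar>t - p\<bar> / 2)) = r" by (simp add: r_def add.commute)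
  have c: "relu (1 - r) \<le> 1" using r0 by (simp add: relu_def)
  have "pm m t p = min 1 r" by (simp add: pm_def r_def)
  moreover have "min 1 r = 1 - relu (1 - r)" using r0 by (simp add: relu_def min_def max_def)
  ultimately have pmr: "pm m t p = 1 - relu (1 - r)" by simp
  have A: "psem [C1, C2, C3 acc dd] s2 3 = pm m t p"
    using c acc by (auto simp: C1_def C2_def C3_def s2v r_def[symmetric] pmr)
  have B0: "psem [C1, C2, C3 acc dd] s2 acc = relu (s2 acc - max dd 0 * relu (1 - r) + max dd 0)"
    using acc by (auto simp: C1_def C2_def C3_def s2v r_def[symmetric] algebra_simps r_alt)
  have C0: "psem [C1, C2, C3 acc dd] s2 (Suc acc) = relu (s2 (Suc acc) - max (-dd) 0 * relu (1 - r) + max (-dd) 0)"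
    using acc by (auto simp: C1_def C2_def C3_def s2v r_def[symmetric] algebra_simps r_alt)
  have ge: "0 \<le> s2 acc" "0 \<le> s2 (Suc acc)" using n2 acc by (auto simp: nonneg_def)
  have m1: "max dd 0 * relu (1 - r) \<le> max dd 0" using c by (simp add: mult_left_le)
  have m2: "max (-dd) 0 * relu (1 - r) \<le> max (-dd) 0" using c by (simp add: mult_left_le)
  have B: "psem [C1, C2, C3 acc dd] s2 acc = s acc + max dd 0 * pm m t p"
    using B0 ge m1 s2a by (simp add: pmr algebra_simps)
  have C: "psem [C1, C2, C3 acc dd] s2 (Suc acc) = s (Suc acc) + max (-dd) 0 * pm m t p"
    using C0 ge m2 s2a by (simp add: pmr algebra_simps)
  show ?thesis using A B C eq by simp
qed

fun pw :: "nat \<Rightarrow> real \<Rightarrow> nat \<Rightarrow> real" where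
  "pw m t 0 = t"
| "pw m t (Suc i) = pm m t (pw m t i)"

lemma pm_range: "0 \<le> pm m t p \<and> pm m t p \<le> 1"
  by (simp add: pm_def)

lemma pw_range: "0 \<le> t \<Longrightarrow> t \<le> 1 \<Longrightarrow> 0 \<le> pw m t i \<and> pw m t i \<le> 1"
  by (cases i) (auto simp: pm_range)

definition B0 :: "(nat \<times> neuron) list" where
  "B0 = [(1, ([(1,1)],-1)), (2, ([(1,1)],0))]"

definition B1 :: "nat \<Rightarrow> real \<Rightarrow> (nat \<times> neuron) list" where
  "B1 acc d1 = [(2, ([(2,1),(1,-1)],0)), (3, ([(2,1),(1,-1)],0)),
     (acc, ([(acc,1),(2,max d1 0),(1,-(max d1 0))],0)),
     (Suc acc, ([(Suc acc,1),(2,max (-d1) 0),(1,-(max (-d1) 0))],0))]"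

definition mults :: "nat \<Rightarrow> nat \<Rightarrow> nat \<Rightarrow> (nat \<Rightarrow> real) \<Rightarrow> (nat \<times> neuron) list list" where
  "mults m k acc d = concat (map (\<lambda>i. mulg m acc (d (Suc i))) [1..<k])"

definition block :: "nat \<Rightarrow> nat \<Rightarrow> nat \<Rightarrow> (nat \<Rightarrow> real) \<Rightarrow> (nat \<times> neuron) list list" where
  "block m n acc d = [B0, B1 acc (d 1)] @ mults m n acc d"

lemma keys_concat: "keys (concat (map f xs)) = (\<Union>x\<in>set xs. keys (f x))"
  by (induction xs) auto

lemma keys_mults: "keys (mults m k acc d) \<subseteq> {3,8,9,10,11,12,acc,Suc acc}"
  unfolding mults_def keys_concat using keys_mulg by blast

lemma keys_block: "keys (block m n acc d) \<subseteq> {1,2,3,8,9,10,11,12,acc,Suc acc}"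
  using keys_mults[of m n acc d] by (auto simp: block_def B0_def B1_def)

lemma relu_min1: "0 \<le> A \<Longrightarrow> relu (A - relu (A - 1)) = min A 1"
  by (auto simp: relu_def min_def max_def)

lemma B01_sem:
  assumes s: "nonneg s" and acc: "acc = 4 \<or> acc = 6"
  shows "psem [B0, B1 acc d1] s 1 = relu (s 1 - 1) \<and>
         psem [B0, B1 acc d1] s 2 = min (s 1) 1 \<and>
         psem [B0, B1 acc d1] s 3 = min (s 1) 1 \<and>
         psem [B0, B1 acc d1] s acc = s acc + max d1 0 * min (s 1) 1 \<and>
         psem [B0, B1 acc d1] s (Suc acc) = s (Suc acc) + max (-d1) 0 * min (s 1) 1"
proof -
  have A: "0 \<le> s 1" "0 \<le> s acc" "0 \<le> s (Suc acc)" using s acc by (auto simp: nonneg_def)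
  have e: "s 1 - relu (s 1 - 1) = min (s 1) 1" using A by (auto simp: relu_def min_def max_def)
  have e2: "s (acc) + max d1 0 * s 1 - max d1 0 * relu (s 1 - 1) = s acc + max d1 0 * min (s 1) 1"
    unfolding e[symmetric] by (simp add: algebra_simps)
  have e3: "s (Suc acc) + max (-d1) 0 * s 1 - max (-d1) 0 * relu (s 1 - 1) = s (Suc acc) + max (-d1) 0 * min (s 1) 1"
    unfolding e[symmetric] by (simp add: algebra_simps)
  have p1: "0 \<le> s acc + max d1 0 * min (s 1) 1" "0 \<le> s (Suc acc) + max (-d1) 0 * min (s 1) 1"
    using A by auto
  show ?thesis using A acc relu_min1[of "s 1"] e2 e3 p1
    by (auto simp: B0_def B1_def algebra_simps)
qed

lemma mults_sem:
  assumes s: "nonneg s" and acc: "acc = 4 \<or> acc = 6" and k: "1 \<le> k"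
    and t: "0 \<le> t" "t \<le> 1" and v: "s 2 = t" "s 3 = t"
  shows "psem (mults m k acc d) s 2 = t \<and> psem (mults m k acc d) s 3 = pw m t (k - 1) \<and>
    psem (mults m k acc d) s acc = s acc + (\<Sum>i\<in>{1..<k}. max (d (Suc i)) 0 * pw m t i) \<and>
    psem (mults m k acc d) s (Suc acc) = s (Suc acc) + (\<Sum>i\<in>{1..<k}. max (-(d (Suc i))) 0 * pw m t i)"
  using k
proof (induction k)
  case 0
  then show ?case by simp
next
  case (Suc k)
  show ?case
  proof (cases "k = 0")
    case True
    then show ?thesis using v by (simp add: mults_def)
  next
    case False
    then have k1: "1 \<le> k" by simp
    note IH = Suc.IH[OF k1]
    have eq: "mults m (Suc k) acc d = mults m k acc d @ mulg m acc (d (Suc k))"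
      using k1 by (simp add: mults_def)
    let ?s = "psem (mults m k acc d) s"
    have n: "nonneg ?s" by (rule psem_nonneg[OF s])
    have pr: "0 \<le> pw m t (k - 1)" "pw m t (k - 1) \<le> 1" using pw_range[OF t] by auto
    have "2 \<notin> keys (mulg m acc (d (Suc k)))" using keys_mulg[of m acc "d (Suc k)"] acc by auto
    then have two: "psem (mulg m acc (d (Suc k))) ?s 2 = t" using IH by (simp add: psem_frame)
    have ms: "psem (mulg m acc (d (Suc k))) ?s 3 = pm m t (pw m t (k - 1)) \<and>
         psem (mulg m acc (d (Suc k))) ?s acc = ?s acc + max (d (Suc k)) 0 * pm m t (pw m t (k - 1)) \<and>
         psem (mulg m acc (d (Suc k))) ?s (Suc acc) = ?s (Suc acc) + max (-(d (Suc k))) 0 * pm m t (pw m t (k - 1))"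
      using mulg_sem[OF n acc t pr] IH by simp
    obtain k' where k': "k = Suc k'" using k1 by (cases k) auto
    have pwk: "pm m t (pw m t (k - 1)) = pw m t k" by (simp add: k')
    have sm: "(\<Sum>i\<in>{1..<Suc k}. f i) = (\<Sum>i\<in>{1..<k}. f i) + f k" for f :: "nat \<Rightarrow> real"
      using k1 by simp
    show ?thesis unfolding eq psem_append using two ms IH pwk sm False by simp
  qed
qed

lemma block_sem:
  assumes s: "nonneg s" and acc: "acc = 4 \<or> acc = 6" and n: "1 \<le> n"
  shows "psem (block m n acc d) s 1 = relu (s 1 - 1) \<and>
    psem (block m n acc d) s acc = s acc + (\<Sum>i<n. max (d (Suc i)) 0 * pw m (min (s 1) 1) i) \<and>
    psem (block m n acc d) s (Suc acc) = s (Suc acc) + (\<Sum>i<n. max (-(d (Suc i))) 0 * pw m (min (s 1) 1) i)"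
proof -
  let ?s1 = "psem [B0, B1 acc (d 1)] s"
  let ?t = "min (s 1) 1"
  have n1: "nonneg ?s1" by (rule psem_nonneg[OF s])
  have b: "?s1 1 = relu (s 1 - 1)" "?s1 2 = ?t" "?s1 3 = ?t" "?s1 acc = s acc + max (d 1) 0 * ?t"
     "?s1 (Suc acc) = s (Suc acc) + max (-(d 1)) 0 * ?t"
    using B01_sem[OF s acc] by auto
  have t: "0 \<le> ?t" "?t \<le> 1" using s by (auto simp: nonneg_def)
  note ms = mults_sem[OF n1 acc n t b(2,3), of m d]
  have "1 \<notin> keys (mults m n acc d)" using keys_mults[of m n acc d] acc by auto
  then have one: "psem (mults m n acc d) ?s1 1 = relu (s 1 - 1)" using b by (simp add: psem_frame)
  have split1: "(\<Sum>i<n. f i) = f 0 + (\<Sum>i\<in>{1..<n}. f i)" for f :: "nat \<Rightarrow> real"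
  proof -
    have "{..<n} = insert 0 {1..<n}" using n by auto
    then show ?thesis by simp
  qed
  show ?thesis using ms one b split1[of "\<lambda>i. max (d (Suc i)) 0 * pw m ?t i"]
                  split1[of "\<lambda>i. max (-(d (Suc i))) 0 * pw m ?t i"]
    by (simp add: block_def algebra_simps)
qed

definition pass :: "nat \<Rightarrow> nat \<Rightarrow> nat \<Rightarrow> nat \<Rightarrow> (nat \<Rightarrow> nat \<Rightarrow> real) \<Rightarrow> (nat \<times> neuron) list list" where
  "pass m n N acc cf = concat (map (\<lambda>j. block m n acc (cf j)) [0..<N])"

lemma keys_pass: "keys (pass m n N acc cf) \<subseteq> {1,2,3,8,9,10,11,12,acc,Suc acc}"
  unfolding pass_def keys_concat using keys_block by blast

lemma relu_shift: "relu (relu (Y - real j) - 1) = relu (Y - real (Suc j))"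
  by (auto simp: relu_def max_def)

lemma pass_sem:
  assumes s: "nonneg s" and acc: "acc = 4 \<or> acc = 6" and n: "1 \<le> n"
  shows "psem (pass m n N acc cf) s 1 = relu (s 1 - real N) \<and>
    psem (pass m n N acc cf) s acc = s acc +
       (\<Sum>j<N. \<Sum>i<n. max (cf j (Suc i)) 0 * pw m (min (relu (s 1 - real j)) 1) i) \<and>
    psem (pass m n N acc cf) s (Suc acc) = s (Suc acc) +
       (\<Sum>j<N. \<Sum>i<n. max (-(cf j (Suc i))) 0 * pw m (min (relu (s 1 - real j)) 1) i)"
proof (induction N)
  case 0
  have "0 \<le> s 1" using s by (simp add: nonneg_def)
  then show ?case by (simp add: pass_def)
next
  case (Suc N)
  have eq: "pass m n (Suc N) acc cf = pass m n N acc cf @ block m n acc (cf N)"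
    by (simp add: pass_def)
  let ?s = "psem (pass m n N acc cf) s"
  have ns: "nonneg ?s" by (rule psem_nonneg[OF s])
  show ?case using block_sem[OF ns acc n, of m "cf N"] Suc.IH
    by (simp add: eq relu_shift algebra_simps)
qed


lemma pm_err:
  assumes "0 \<le> t" "t \<le> 1" "0 \<le> p" "p \<le> 1"
  shows "\<bar>pm m t p - t * p\<bar> \<le> 1 / 4^(Suc m)"
proof -
  let ?w1 = "(t + p) / 2" and ?w2 = "\<bar>t - p\<bar> / 2"
  have b1: "?w1^2 \<le> sqa m ?w1 \<and> sqa m ?w1 \<le> ?w1^2 + 1 / 4^(Suc m)"
    using assms by (intro sqa_bounds) auto
  have b2: "?w2^2 \<le> sqa m ?w2 \<and> sqa m ?w2 \<le> ?w2^2 + 1 / 4^(Suc m)"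
    using assms by (intro sqa_bounds) auto
  have tp: "?w1^2 - ?w2^2 = t * p"
    by (simp add: power2_eq_square power_divide abs_mult_self_eq field_simps)
  define r where "r = sqa m ?w1 - sqa m ?w2"
  have r: "\<bar>r - t * p\<bar> \<le> 1 / 4^(Suc m)" using b1 b2 tp by (simp add: r_def abs_le_iff)
  have tp01: "0 \<le> t * p" "t * p \<le> 1" using assms by (auto intro: mult_le_one)
  have "pm m t p = min 1 (max r 0)" by (simp add: pm_def r_def relu_def)
  then show ?thesis using r tp01 by (auto simp: abs_le_iff min_def max_def)
qed

lemma pw_err:
  assumes "0 \<le> t" "t \<le> 1"
  shows "\<bar>pw m t i - t^(Suc i)\<bar> \<le> real i / 4^(Suc m)"
proof (induction i)
  case 0
  then show ?case by simp
next
  case (Suc i)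
  have r: "0 \<le> pw m t i" "pw m t i \<le> 1" using pw_range[OF assms] by auto
  have "\<bar>pw m t (Suc i) - t^(Suc (Suc i))\<bar> \<le> \<bar>pm m t (pw m t i) - t * pw m t i\<bar> + \<bar>t * (pw m t i - t^(Suc i))\<bar>"
    by (simp add: algebra_simps abs_triangle_ineq[THEN order_trans])
  also have "\<dots> \<le> 1 / 4^(Suc m) + \<bar>pw m t i - t^(Suc i)\<bar>"
  proof -
    have "\<bar>t * (pw m t i - t^(Suc i))\<bar> \<le> 1 * \<bar>pw m t i - t^(Suc i)\<bar>"
      unfolding abs_mult using assms by (intro mult_right_mono) auto
    then show ?thesis using pm_err[OF assms r, of m] by (intro add_mono) simp_all
  qed
  also have "\<dots> \<le> 1 / 4^(Suc m) + real i / 4^(Suc m)" using Suc by simp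
  finally show ?case by (simp add: add_divide_distrib)
qed

lemma telescope_approx:
  fixes g :: "real \<Rightarrow> real" and c :: "nat \<Rightarrow> real \<Rightarrow> real"
  assumes D: "0 < D" and N: "0 < N" and R: "0 \<le> R"
    and tay: "\<And>a b. -D \<le> a \<Longrightarrow> a \<le> b \<Longrightarrow> b \<le> D \<Longrightarrow>
        \<bar>g b - (\<Sum>i\<le>n. (b-a)^i / fact i * c i a)\<bar> \<le> R * (b-a)^(Suc n)"
    and x: "-D \<le> x" "x \<le> D"
    and h: "h = 2 * D / real N"
  shows "\<bar>g x - (c 0 (-D) + (\<Sum>j<N. \<Sum>i<n. (h^(Suc i) / fact (Suc i) * c (Suc i) (-D + real j * h))
            * (min (relu ((x + D) / h - real j)) 1)^(Suc i)))\<bar> \<le> real N * R * h^(Suc n)"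
proof -
  have hpos: "0 < h" using D N h by simp
  have c0: "c 0 a = g a" if "-D \<le> a" "a \<le> D" for a
  proof -
    have "(\<Sum>i\<le>n. (a - a)^i / fact i * c i a) = c 0 a" by (induction n) auto
    then show ?thesis using tay[of a a] that by simp
  qed
  define aj where "aj j = -D + real j * h" for j
  define t where "t j = min (relu ((x + D) / h - real j)) 1" for j
  define b where "b j = aj j + h * t j" for j
  define T where "T j = (\<Sum>i\<le>n. (b j - aj j)^i / fact i * c i (aj j))" for j
  have ajN: "aj N = D" using N h by (simp add: aj_def)
  have aj0: "aj 0 = -D" by (simp add: aj_def)
  have t01: "0 \<le> t j" "t j \<le> 1" for j by (auto simp: t_def)
  have inner: "(\<Sum>i<n. (h^(Suc i) / fact (Suc i) * c (Suc i) (-D + real j * h)) * (t j)^(Suc i))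
        = T j - g (aj j)" if "j < N" for j
  proof -
    have a: "-D \<le> aj j" "aj j \<le> D"
    proof -
      show "-D \<le> aj j" using hpos by (simp add: aj_def)
      have "real j * h \<le> real N * h" using that hpos by (intro mult_right_mono) auto
      then show "aj j \<le> D" using ajN by (simp add: aj_def)
    qed
    have "T j = c 0 (aj j) + (\<Sum>i<n. (h * t j)^(Suc i) / fact (Suc i) * c (Suc i) (aj j))"
      unfolding T_def b_def by (subst sum.atMost_shift) simp
    also have "(\<Sum>i<n. (h * t j)^(Suc i) / fact (Suc i) * c (Suc i) (aj j)) =
        (\<Sum>i<n. (h^(Suc i) / fact (Suc i) * c (Suc i) (-D + real j * h)) * (t j)^(Suc i))"
      by (intro sum.cong refl) (simp add: aj_def power_mult_distrib)
    finally show ?thesis using c0[OF a] by simp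
  qed
  have err: "\<bar>g (b j) - T j\<bar> \<le> R * h^(Suc n)" if "j < N" for j
  proof -
    have "real (Suc j) * h \<le> real N * h" using that hpos by (intro mult_right_mono) auto
    then have "aj j + h \<le> D" using ajN by (simp add: aj_def algebra_simps)
    moreover have "h * t j \<le> h" using t01[of j] hpos by (simp add: mult_left_le)
    moreover have "0 \<le> h * t j" using t01[of j] hpos by simp
    moreover have "-D \<le> aj j" using hpos by (simp add: aj_def)
    ultimately have bb: "-D \<le> aj j" "aj j \<le> b j" "b j \<le> D"
      unfolding b_def by linarith+
    have "\<bar>g (b j) - T j\<bar> \<le> R * (b j - aj j)^(Suc n)" unfolding T_def by (rule tay[OF bb])
    also have "\<dots> \<le> R * h^(Suc n)"
    proof -
      have "(h * t j)^(Suc n) \<le> h^(Suc n)"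
        using \<open>h * t j \<le> h\<close> \<open>0 \<le> h * t j\<close> by (rule power_mono)
      then show ?thesis using R by (simp add: b_def mult_left_mono del: power_Suc)
    qed
    finally show ?thesis .
  qed
  have bcl: "b j = max (aj j) (min x (aj (Suc j)))" for j
  proof -
    have "(x + D) / h - real j = (x - aj j) / h" using hpos by (simp add: aj_def field_simps)
    then have "h * t j = min (relu (x - aj j)) h"
      using hpos by (simp add: t_def relu_def min_mult_distrib_left max_mult_distrib_left)
    moreover have "aj (Suc j) = aj j + h" by (simp add: aj_def algebra_simps)
    ultimately show ?thesis using hpos by (auto simp: b_def relu_def min_def max_def)
  qed
  define G where "G j = g (min x (aj j))" for j
  have tel1: "g (b j) - g (aj j) = G (Suc j) - G j" for j
  proof -
    have mono: "aj j \<le> aj (Suc j)" using hpos by (simp add: aj_def algebra_simps)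
    consider "x \<le> aj j" | "aj j \<le> x" "x \<le> aj (Suc j)" | "aj (Suc j) \<le> x" by linarith
    then show ?thesis
    proof cases
      case 1 then show ?thesis using mono by (simp add: bcl G_def)
    next
      case 2 then show ?thesis using mono by (simp add: bcl G_def)
    next
      case 3 then show ?thesis using mono by (simp add: bcl G_def)
    qed
  qed
  have tel: "(\<Sum>j<N. g (b j) - g (aj j)) = g x - g (-D)"
  proof -
    have "(\<Sum>j<N. g (b j) - g (aj j)) = (\<Sum>j<N. G (Suc j) - G j)" by (simp add: tel1)
    also have "\<dots> = G N - G 0" by (rule sum_lessThan_telescope)
    finally show ?thesis using x by (simp add: G_def ajN aj0)
  qed
  have "g x - (c 0 (-D) + (\<Sum>j<N. \<Sum>i<n. (h^(Suc i) / fact (Suc i) * c (Suc i) (-D + real j * h))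
            * (min (relu ((x + D) / h - real j)) 1)^(Suc i)))
        = g x - (g (-D) + (\<Sum>j<N. T j - g (aj j)))"
    using D inner by (simp add: c0 t_def)
  also have "\<dots> = (\<Sum>j<N. g (b j) - T j)" using tel by (simp add: sum_subtractf)
  finally have "\<bar>g x - (c 0 (-D) + (\<Sum>j<N. \<Sum>i<n. (h^(Suc i) / fact (Suc i) * c (Suc i) (-D + real j * h))
            * (min (relu ((x + D) / h - real j)) 1)^(Suc i)))\<bar> = \<bar>\<Sum>j<N. g (b j) - T j\<bar>" by simp
  also have "\<dots> \<le> (\<Sum>j<N. \<bar>g (b j) - T j\<bar>)" by (rule sum_abs)
  also have "\<dots> \<le> (\<Sum>j<N. R * h^(Suc n))" by (intro sum_mono err) simp
  finally show ?thesis by simp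
qed

definition cf :: "(nat \<Rightarrow> real \<Rightarrow> real) \<Rightarrow> real \<Rightarrow> real \<Rightarrow> nat \<Rightarrow> nat \<Rightarrow> real" where
  "cf c D h j k = h^k / fact k * c k (-D + real j * h)"

lemma net_approx:
  fixes g :: "real \<Rightarrow> real" and c :: "nat \<Rightarrow> real \<Rightarrow> real"
  assumes D: "0 < D" and N: "0 < N" and R: "0 \<le> R"
    and tay: "\<And>a b. -D \<le> a \<Longrightarrow> a \<le> b \<Longrightarrow> b \<le> D \<Longrightarrow>
        \<bar>g b - (\<Sum>i\<le>n. (b-a)^i / fact i * c i a)\<bar> \<le> R * (b-a)^(Suc n)"
    and x: "-D \<le> x" "x \<le> D"
    and h: "h = 2 * D / real N"
    and L0: "0 \<le> L" and Lb: "\<And>j i. j < N \<Longrightarrow> i < n \<Longrightarrow> \<bar>cf c D h j (Suc i)\<bar> \<le> L"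
  shows "\<bar>g x - (c 0 (-D) + (\<Sum>j<N. \<Sum>i<n. cf c D h j (Suc i) * pw m (min (relu ((x + D) / h - real j)) 1) i))\<bar>
     \<le> real N * R * h^(Suc n) + real N * real n * L * real n / 4^(Suc m)"
proof -
  let ?t = "\<lambda>j. min (relu ((x + D) / h - real j)) 1"
  have t01: "0 \<le> ?t j" "?t j \<le> 1" for j by auto
  have A: "\<bar>g x - (c 0 (-D) + (\<Sum>j<N. \<Sum>i<n. cf c D h j (Suc i) * (?t j)^(Suc i)))\<bar> \<le> real N * R * h^(Suc n)"
    using telescope_approx[OF D N R tay x h] by (simp add: cf_def)
  have B: "\<bar>(\<Sum>j<N. \<Sum>i<n. cf c D h j (Suc i) * pw m (?t j) i) - (\<Sum>j<N. \<Sum>i<n. cf c D h j (Suc i) * (?t j)^(Suc i))\<bar>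
       \<le> real N * real n * L * real n / 4^(Suc m)"
  proof -
    have "\<bar>(\<Sum>j<N. \<Sum>i<n. cf c D h j (Suc i) * pw m (?t j) i) - (\<Sum>j<N. \<Sum>i<n. cf c D h j (Suc i) * (?t j)^(Suc i))\<bar>
        = \<bar>\<Sum>j<N. \<Sum>i<n. cf c D h j (Suc i) * (pw m (?t j) i - (?t j)^(Suc i))\<bar>"
      by (simp add: sum_subtractf right_diff_distrib)
    also have "\<dots> \<le> (\<Sum>j<N. \<Sum>i<n. \<bar>cf c D h j (Suc i) * (pw m (?t j) i - (?t j)^(Suc i))\<bar>)"
      by (rule order_trans[OF sum_abs]) (intro sum_mono sum_abs)
    also have "\<dots> \<le> (\<Sum>j<N. \<Sum>i<n. L * (real n / 4^(Suc m)))"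
    proof (intro sum_mono)
      fix j i assume j: "j \<in> {..<N}" and i: "i \<in> {..<n}"
      have "\<bar>pw m (?t j) i - (?t j)^(Suc i)\<bar> \<le> real i / 4^(Suc m)" by (rule pw_err) auto
      also have "\<dots> \<le> real n / 4^(Suc m)" using i by (intro divide_right_mono) auto
      finally have e: "\<bar>pw m (?t j) i - (?t j)^(Suc i)\<bar> \<le> real n / 4^(Suc m)" .
      show "\<bar>cf c D h j (Suc i) * (pw m (?t j) i - (?t j)^(Suc i))\<bar> \<le> L * (real n / 4^(Suc m))"
        unfolding abs_mult using Lb[of j i] j i e L0 by (intro mult_mono) auto
    qed
    also have "\<dots> = real N * real n * L * real n / 4^(Suc m)" by simp
    finally show ?thesis .
  qed
  show ?thesis using A B by linarith
qed


definition Ldbl :: "(nat \<times> neuron) list" where "Ldbl = [(0, ([(0,2)],0))]"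
definition Lsc :: "real \<Rightarrow> (nat \<times> neuron) list" where "Lsc c2 = [(0, ([(0,c2)],0)), (1, ([(0,c2)],0))]"
definition Lreset :: "(nat \<times> neuron) list" where "Lreset = [(1, ([(0,1)],0))]"
definition Lin :: "real \<Rightarrow> real \<Rightarrow> (nat \<times> neuron) list" where "Lin c1 D = [(0, ([(0,c1)], c1 * D))]"

definition pre :: "nat \<Rightarrow> real \<Rightarrow> (nat \<times> neuron) list list" where
  "pre rr c2 = replicate rr Ldbl @ [Lsc c2]"

definition hidR where "hidR rr c2 m n N cR = pre rr c2 @ pass m n N 4 cR"
definition hidC where "hidC rr c2 m n N cR cI = pre rr c2 @ pass m n N 4 cR @ [Lreset] @ pass m n N 6 cI"
definition outR :: "real \<Rightarrow> neuron list" where "outR b = [([(4,1),(5,-1)], b)]"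
definition outC :: "real \<Rightarrow> real \<Rightarrow> neuron list" where "outC bR bI = [([(4,1),(5,-1)], bR), ([(6,1),(7,-1)], bI)]"

definition Pval :: "nat \<Rightarrow> nat \<Rightarrow> nat \<Rightarrow> (nat \<Rightarrow> nat \<Rightarrow> real) \<Rightarrow> real \<Rightarrow> real" where
  "Pval m n N c Y = (\<Sum>j<N. \<Sum>i<n. c j (Suc i) * pw m (min (relu (Y - real j)) 1) i)"

lemma keys_dbl: "keys (replicate r Ldbl) \<subseteq> {0}"
  by (induction r) (auto simp: Ldbl_def)

lemma dbl_sem: "nonneg s \<Longrightarrow> psem (replicate r Ldbl) s 0 = 2^r * s 0"
proof (induction r arbitrary: s)
  case 0 then show ?case by simp
next
  case (Suc r)
  have "0 \<le> s 0" using Suc.prems by (simp add: nonneg_def)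
  then have e: "lsem Ldbl s = s(0 := 2 * s 0)"
    by (simp add: Ldbl_def)
  have "nonneg (s(0 := 2 * s 0))" using Suc.prems \<open>0 \<le> s 0\<close> by (auto simp: nonneg_def)
  then have i: "psem (replicate r Ldbl) (s(0 := 2 * s 0)) 0 = 2^r * (2 * s 0)" using Suc.IH by (simp only: fun_upd_same)
  have "psem (replicate (Suc r) Ldbl) s 0 = psem (replicate r Ldbl) (lsem Ldbl s) 0" by simp
  also have "\<dots> = 2^r * (2 * s 0)" by (simp only: e i)
  finally show ?case by simp
qed

definition s1 :: "real \<Rightarrow> real \<Rightarrow> real \<Rightarrow> nat \<Rightarrow> real" where
  "s1 c1 D x = (\<lambda>k. relu (nev (nfun (Lin c1 D) k) (sin0 x)))"

lemma s1_vals: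
  assumes "0 \<le> c1" "0 \<le> x + D"
  shows "s1 c1 D x 0 = c1 * (x + D)" "\<And>k. 0 < k \<Longrightarrow> k < 13 \<Longrightarrow> s1 c1 D x k = 0" "nonneg (s1 c1 D x)"
proof -
  have "0 \<le> c1 * (x + D)" using assms by simp
  then show "s1 c1 D x 0 = c1 * (x + D)"
    by (simp add: s1_def nfun_eq Lin_def sin0_def algebra_simps)
  show "\<And>k. 0 < k \<Longrightarrow> k < 13 \<Longrightarrow> s1 c1 D x k = 0"
    by (simp add: s1_def nfun_eq Lin_def sin0_def)
  show "nonneg (s1 c1 D x)" by (simp add: s1_def nonneg_def)
qed

lemma pre_sem:
  fixes rr :: nat
  assumes "0 \<le> c1" "0 \<le> c2" "0 \<le> x + D"
    and s_def: "s = psem (pre rr c2) (s1 c1 D x)"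
  shows "s 0 = c2 * 2^rr * c1 * (x + D)" "s 1 = c2 * 2^rr * c1 * (x + D)"
    "s 4 = 0" "s 5 = 0" "s 6 = 0" "s 7 = 0" "nonneg s"
proof -
  note v = s1_vals[OF assms(1,3)]
  let ?r = "psem (replicate rr Ldbl) (s1 c1 D x)"
  have r0: "?r 0 = 2^rr * (c1 * (x + D))" using dbl_sem[OF v(3)] v(1) by simp
  have rk: "?r k = 0" if "0 < k" "k < 13" for k
    using keys_dbl[of rr] that v(2)[OF that] by (subst psem_frame) auto
  have pos: "0 \<le> 2^rr * (c1 * (x + D))" using assms by simp
  have sd: "s = lsem (Lsc c2) ?r" by (simp add: s_def pre_def)
  show "s 0 = c2 * 2^rr * c1 * (x + D)" "s 1 = c2 * 2^rr * c1 * (x + D)"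
    using pos assms(2) unfolding sd by (simp_all add: Lsc_def r0)
  show "s 4 = 0" "s 5 = 0" "s 6 = 0" "s 7 = 0" by (simp_all add: sd Lsc_def rk)
  show "nonneg s" unfolding s_def by (rule psem_nonneg[OF v(3)])
qed

lemma pass_diff:
  assumes s: "nonneg s" and acc: "acc = 4 \<or> acc = 6" and n: "1 \<le> n"
  shows "psem (pass m n N acc c) s acc - psem (pass m n N acc c) s (Suc acc)
     = s acc - s (Suc acc) + Pval m n N c (s 1)"
proof -
  have e: "max a 0 - max (-a) 0 = a" for a :: real by (simp add: max_def)
  have gen: "(\<Sum>j<N. \<Sum>i<n. max (c j (Suc i)) 0 * P j i) - (\<Sum>j<N. \<Sum>i<n. max (-(c j (Suc i))) 0 * P j i)
     = (\<Sum>j<N. \<Sum>i<n. c j (Suc i) * P j i)" for P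
    by (simp add: sum_subtractf[symmetric] left_diff_distrib[symmetric] e)
  show ?thesis using pass_sem[OF s acc n, of m N c] gen[of "\<lambda>j i. pw m (min (relu (s 1 - real j)) 1) i"]
    unfolding Pval_def by simp
qed

lemma realize_hchain_full:
  "realize (fullnet L0 Ls outs) [x] = affine (pout outs) (hchain (map (player 13) Ls) (map relu (affine (player 1 L0) [x])))"
proof -
  have "fullnet L0 Ls outs = (player 1 L0 # map (player 13) Ls) @ [pout outs]" by (simp add: fullnet_def)
  then show ?thesis using realize_append_out[of "player 1 L0 # map (player 13) Ls" "pout outs" "[x]"]
    by (simp only: hchain_def fold_Cons comp_def)
qed

lemma wfL_Lok_list: "\<forall>L\<in>set Ls. Lok c L \<Longrightarrow> \<forall>L\<in>set Ls. wfL L"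
  using Lok_wfL by blast

lemma full_sem:
  assumes "\<forall>L\<in>set Ls. wfL L" "\<forall>nr\<in>set outs. \<forall>(i,w)\<in>set (fst nr). i < 13"
  shows "realize (fullnet (Lin c1 D) Ls outs) [x] = map (\<lambda>nr. nev nr (psem Ls (s1 c1 D x))) outs"
proof -
  have "map relu (affine (player 1 (Lin c1 D)) [x]) = map (s1 c1 D x) [0..<13]"
    using first_layer[of "Lin c1 D" x] by (simp add: s1_def)
  moreover have "nonneg (s1 c1 D x)" by (simp add: s1_def nonneg_def)
  ultimately show ?thesis
    using assms by (simp add: realize_hchain_full hchain_psem affine_pout)
qed

lemma realR:
  assumes c: "0 \<le> c1" "0 \<le> c2" "0 \<le> x + D" and n: "1 \<le> n"
    and wf: "\<forall>L\<in>set (hidR rr c2 m n N cR). wfL L"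
  shows "hd (realize (fullnet (Lin c1 D) (hidR rr c2 m n N cR) (outR b)) [x])
       = b + Pval m n N cR (c2 * 2^rr * c1 * (x + D))"
proof -
  let ?s = "psem (pre rr c2) (s1 c1 D x)"
  note p = pre_sem[OF c refl, of rr]
  have "psem (pass m n N 4 cR) ?s 4 - psem (pass m n N 4 cR) ?s 5 = Pval m n N cR (c2 * 2^rr * c1 * (x + D))"
    using pass_diff[OF p(7) _ n, of 4 m N cR] p by simp
  then show ?thesis using wf
    by (simp add: full_sem outR_def hidR_def)
qed

lemma realC:
  assumes c: "0 \<le> c1" "0 \<le> c2" "0 \<le> x + D" and n: "1 \<le> n"
    and wf: "\<forall>L\<in>set (hidC rr c2 m n N cR cI). wfL L"
  shows "realize (fullnet (Lin c1 D) (hidC rr c2 m n N cR cI) (outC bR bI)) [x] ! 0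
       = bR + Pval m n N cR (c2 * 2^rr * c1 * (x + D))"
    "realize (fullnet (Lin c1 D) (hidC rr c2 m n N cR cI) (outC bR bI)) [x] ! 1
       = bI + Pval m n N cI (c2 * 2^rr * c1 * (x + D))"
proof -
  let ?Y = "c2 * 2^rr * c1 * (x + D)"
  let ?s = "psem (pre rr c2) (s1 c1 D x)"
  note p = pre_sem[OF c refl, of rr]
  let ?s2 = "psem (pass m n N 4 cR) ?s"
  have d1: "?s2 4 - ?s2 5 = Pval m n N cR ?Y"
    using pass_diff[OF p(7) _ n, of 4 m N cR] p by simp
  have k1: "keys (pass m n N 4 cR) \<subseteq> {1,2,3,8,9,10,11,12,4,5}" using keys_pass[of m n N 4 cR] by simp
  have s2v: "?s2 0 = ?Y" "?s2 6 = 0" "?s2 7 = 0"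
    using k1 p by (subst psem_frame; force)+
  let ?s3 = "lsem Lreset ?s2"
  have n3: "nonneg ?s3" by (intro lsem_nonneg psem_nonneg p(7))
  have Y0: "0 \<le> ?Y" using c by simp
  have s3v: "?s3 1 = ?Y" "?s3 6 = 0" "?s3 7 = 0" "?s3 4 = ?s2 4" "?s3 5 = ?s2 5"
    using s2v Y0 by (simp_all add: Lreset_def)
  let ?s4 = "psem (pass m n N 6 cI) ?s3"
  have d2: "?s4 6 - ?s4 7 = Pval m n N cI ?Y"
    using pass_diff[OF n3 _ n, of 6 m N cI] s3v by simp
  have k2: "keys (pass m n N 6 cI) \<subseteq> {1,2,3,8,9,10,11,12,6,7}" using keys_pass[of m n N 6 cI] by simp
  have s4v: "?s4 4 = ?s2 4" "?s4 5 = ?s2 5"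
    using k2 s3v by (subst psem_frame; force)+
  have eq: "psem (hidC rr c2 m n N cR cI) (s1 c1 D x) = ?s4" by (simp add: hidC_def)
  have outs: "\<forall>nr\<in>set (outC bR bI). \<forall>(i,w)\<in>set (fst nr). i < 13" by (simp add: outC_def)
  show "realize (fullnet (Lin c1 D) (hidC rr c2 m n N cR cI) (outC bR bI)) [x] ! 0 = bR + Pval m n N cR ?Y"
    using full_sem[OF wf outs] d1 s4v by (simp add: eq outC_def)
  show "realize (fullnet (Lin c1 D) (hidC rr c2 m n N cR cI) (outC bR bI)) [x] ! 1 = bI + Pval m n N cI ?Y"
    using full_sem[OF wf outs] d2 by (simp add: eq outC_def)
qed


lemma Lok_Cons[simp]: "Lok c ((k,nr)#L) \<longleftrightarrow> nok c nr \<and> Lok c L"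
  by (simp add: Lok_def)
lemma Lok_Nil[simp]: "Lok c []" by (simp add: Lok_def)

lemma pow4_le: "2 / 4^(Suc q) \<le> (1::real)"
proof -
  have "(1::real) \<le> 4^q" by (rule one_le_power) simp
  then have "(2::real) \<le> 4 * 4^q" by linarith
  then have "(2::real) \<le> 4^(Suc q)" by simp
  then show ?thesis by (simp add: divide_le_eq del: power_Suc)
qed

lemma Lok_saws:
  assumes "2 \<le> c" "L \<in> set (saws m)"
  shows "Lok c L"
proof -
  from assms(2) obtain q where "L = SA \<or> L = SB q" by (auto simp: saws_def saw_def split: if_splits)
  moreover have "Lok c SA" using assms(1) by (simp add: SA_def nok_def)
  moreover have "Lok c (SB q)"
  proof -
    have a: "2 / 4^(Suc q) \<le> c" using pow4_le[of q] assms(1) by linarith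
    have "0 \<le> 2 / (4::real)^(Suc q)" by simp
    then show ?thesis using a assms(1) by (simp add: SB_def nok_def del: power_Suc)
  qed
  ultimately show ?thesis by auto
qed

lemma Lok_mulg:
  assumes "2 \<le> c" "\<bar>dd\<bar> \<le> c" "acc = 4 \<or> acc = 6" "L \<in> set (mulg m acc dd)"
  shows "Lok c L"
proof -
  have "max dd 0 \<le> c" "max (-dd) 0 \<le> c" using assms(1,2) by auto
  then show ?thesis using assms Lok_saws[of c _ m]
    by (auto simp: mulg_def M0_def M1_def C1_def C2_def C3_def nok_def)
qed

lemma Lok_block:
  assumes "2 \<le> c" "\<And>i. 1 \<le> i \<Longrightarrow> i \<le> n \<Longrightarrow> \<bar>d i\<bar> \<le> c" "acc = 4 \<or> acc = 6" "1 \<le> n"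
    "L \<in> set (block m n acc d)"
  shows "Lok c L"
proof -
  have d1: "\<bar>d 1\<bar> \<le> c" using assms(2,4) by simp
  have "max (d 1) 0 \<le> c" "max (-(d 1)) 0 \<le> c" using d1 assms(1) by auto
  moreover have "Lok c L" if "L \<in> set (mults m n acc d)"
  proof -
    from that obtain i where i: "i \<in> set [1..<n]" "L \<in> set (mulg m acc (d (Suc i)))"
      by (auto simp: mults_def)
    then show ?thesis using assms(1,2,3) by (intro Lok_mulg[of c "d (Suc i)" acc L m]) auto
  qed
  ultimately show ?thesis using assms(1,3,5)
    by (auto simp: block_def B0_def B1_def nok_def)
qed

lemma Lok_pass:
  assumes "2 \<le> c" "\<And>j i. j < N \<Longrightarrow> 1 \<le> i \<Longrightarrow> i \<le> n \<Longrightarrow> \<bar>cc j i\<bar> \<le> c" "acc = 4 \<or> acc = 6" "1 \<le> n"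
    "L \<in> set (pass m n N acc cc)"
  shows "Lok c L"
proof -
  from assms(5) obtain j where "j < N" "L \<in> set (block m n acc (cc j))" by (auto simp: pass_def)
  then show ?thesis using assms(1,2,3,4) by (intro Lok_block[of c n "cc j" acc L m]) auto
qed

lemma Lok_pre:
  assumes "2 \<le> c" "0 \<le> c2" "c2 \<le> c" "L \<in> set (pre rr c2)"
  shows "Lok c L"
  using assms by (auto simp: pre_def Ldbl_def Lsc_def nok_def)

lemma Lok_hidR:
  assumes "2 \<le> c" "0 \<le> c2" "c2 \<le> c" "\<And>j i. j < N \<Longrightarrow> 1 \<le> i \<Longrightarrow> i \<le> n \<Longrightarrow> \<bar>cR j i\<bar> \<le> c" "1 \<le> n"
  shows "\<forall>L\<in>set (hidR rr c2 m n N cR). Lok c L"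
  using assms Lok_pre[of c c2] Lok_pass[of c N n cR 4] by (auto simp: hidR_def)

lemma Lok_hidC:
  assumes "2 \<le> c" "0 \<le> c2" "c2 \<le> c" "\<And>j i. j < N \<Longrightarrow> 1 \<le> i \<Longrightarrow> i \<le> n \<Longrightarrow> \<bar>cR j i\<bar> \<le> c"
    "\<And>j i. j < N \<Longrightarrow> 1 \<le> i \<Longrightarrow> i \<le> n \<Longrightarrow> \<bar>cI j i\<bar> \<le> c" "1 \<le> n"
  shows "\<forall>L\<in>set (hidC rr c2 m n N cR cI). Lok c L"
  using assms Lok_pre[of c c2] Lok_pass[of c N n cR 4] Lok_pass[of c N n cI 6]
  by (auto simp: hidC_def Lreset_def nok_def)

lemma Lok_Lin: "0 \<le> c1 \<Longrightarrow> c1 \<le> c \<Longrightarrow> \<bar>c1 * D\<bar> \<le> c \<Longrightarrow> Lok c (Lin c1 D)"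
  by (simp add: Lin_def nok_def)

lemma nok_outR: "1 \<le> c \<Longrightarrow> \<bar>b\<bar> \<le> c \<Longrightarrow> \<forall>nr\<in>set (outR b). nok c nr"
  by (simp add: outR_def nok_def)

lemma nok_outC: "1 \<le> c \<Longrightarrow> \<bar>b\<bar> \<le> c \<Longrightarrow> \<bar>b'\<bar> \<le> c \<Longrightarrow> \<forall>nr\<in>set (outC b b'). nok c nr"
  by (simp add: outC_def nok_def)

lemma length_saws: "length (saws m) = 2 * m"
  by (induction m) (auto simp: saws_def saw_def)

lemma length_mulg: "length (mulg m acc dd) = 2 * m + 5"
  by (simp add: mulg_def length_saws)

lemma length_mults: "length (mults m k acc d) = (k - 1) * (2 * m + 5)"
proof -
  have "length (mults m k acc d) = (\<Sum>i\<leftarrow>[1..<k]. 2 * m + 5)"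
    by (simp add: mults_def length_concat length_mulg comp_def)
  then show ?thesis by (simp add: sum_list_triv)
qed

lemma length_pass: "length (pass m n N acc cc) = N * (2 + (n - 1) * (2 * m + 5))"
proof -
  have "length (pass m n N acc cc) = (\<Sum>j\<leftarrow>[0..<N]. 2 + (n - 1) * (2 * m + 5))"
    by (simp add: pass_def length_concat block_def length_mults comp_def)
  then show ?thesis by (simp add: sum_list_triv)
qed

lemma length_hidR: "length (hidR rr c2 m n N cR) = rr + 1 + N * (2 + (n - 1) * (2 * m + 5))"
  by (simp add: hidR_def pre_def length_pass)

lemma length_hidC: "length (hidC rr c2 m n N cR cI) = rr + 2 + 2 * (N * (2 + (n - 1) * (2 * m + 5)))"
  by (simp add: hidC_def pre_def length_pass)

lemma length_fullnet: "length (fullnet L0 Ls outs) = length Ls + 2"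
  by (simp add: fullnet_def)

lemma in_NN_full:
  assumes "outs \<noteq> []" "length outs \<le> M" "13 \<le> M" "real (length Ls + 2) \<le> Lb"
  shows "in_NN Lb M 1 (length outs) (fullds Ls (length outs)) (fullnet L0 Ls outs)"
  using assms valid_fullnet[OF assms(1), of Ls L0]
  by (auto simp: in_NN_def fullds_def length_fullnet)


lemma inP_bound_closed:
  fixes F :: "nat \<Rightarrow> real \<Rightarrow> 'a::real_normed_vector"
  assumes D: "0 < D"
    and der: "\<forall>m. \<forall>x \<in> {-D..D}. (F m has_vector_derivative F (Suc m) x) (at x within {-D..D})"
    and bd: "\<forall>m. \<forall>x \<in> {-D<..<D}. norm (F m x) \<le> lam m"
    and x: "x \<in> {-D..D}"
  shows "norm (F m x) \<le> lam m"
proof -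
  have "continuous_on {-D..D} (F m)"
    using der by (intro continuous_on_vector_derivative) blast
  moreover have "closure {-D<..<D} = {-D..D}" using D by simp
  ultimately show ?thesis
    using continuous_on_closure_norm_le[of "{-D<..<D}" "F m" "lam m" x] bd x by auto
qed

lemma inP_taylor:
  fixes F :: "nat \<Rightarrow> real \<Rightarrow> 'a::banach"
  assumes D: "0 < D"
    and F0: "\<forall>x \<in> {-D..D}. F 0 x = f x"
    and der: "\<forall>m. \<forall>x \<in> {-D..D}. (F m has_vector_derivative F (Suc m) x) (at x within {-D..D})"
    and bd: "\<forall>m. \<forall>x \<in> {-D<..<D}. norm (F m x) \<le> lam m"
    and ab: "-D \<le> a" "a \<le> b" "b \<le> D"
  shows "norm (f b - (\<Sum>i\<le>n. ((b-a)^i / fact i) *\<^sub>R F i a)) \<le> lam (Suc n) * (b-a)^(Suc n)"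
proof -
  define G where "G m x = (if m = 0 then f x else F m x)" for m x
  have sub: "{a..b} \<subseteq> {-D..D}" using ab by auto
  have G0: "G 0 = f" by (simp add: G_def fun_eq_iff)
  have derG: "(G m has_vector_derivative G (Suc m) t) (at t within {a..b})"
    if "m < Suc n" "a \<le> t" "t \<le> b" for m t
  proof -
    have t: "t \<in> {-D..D}" using that ab by auto
    have d: "(F m has_vector_derivative F (Suc m) t) (at t within {a..b})"
      using der t sub by (blast intro: has_vector_derivative_within_subset)
    show ?thesis
    proof (cases "m = 0")
      case False
      then have "G m = F m" "G (Suc m) t = F (Suc m) t" by (simp_all add: G_def fun_eq_iff)
      then show ?thesis using d by simp
    next
      case True
      have "(f has_vector_derivative F (Suc m) t) (at t within {a..b})"
        using d True
        by (rule_tac has_vector_derivative_transform[where f="F 0"]) (use F0 sub that in auto)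
      moreover have "G (Suc m) t = F (Suc m) t" by (simp add: G_def)
      ultimately show ?thesis using True G0 by simp
    qed
  qed
  have T: "((\<lambda>x. ((b - x) ^ (Suc n - 1) / fact (Suc n - 1)) *\<^sub>R G (Suc n) x) has_integral
      f b - (\<Sum>i<Suc n. ((b-a) ^ i / fact i) *\<^sub>R G i a)) {a..b}"
    by (rule Taylor_has_integral[of "Suc n" G f a b]) (use derG G0 ab in auto)
  have sumeq: "(\<Sum>i<Suc n. ((b-a) ^ i / fact i) *\<^sub>R G i a) = (\<Sum>i\<le>n. ((b-a)^i / fact i) *\<^sub>R F i a)"
  proof -
    have "G i a = F i a" for i using F0 ab by (simp add: G_def)
    then show ?thesis by (simp add: lessThan_Suc_atMost)
  qed
  have bnd: "norm (((b - x) ^ n / fact n) *\<^sub>R G (Suc n) x) \<le> (b-a)^n * lam (Suc n)"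
    if "x \<in> {a..b} - {a,b}" for x
  proof -
    have x: "x \<in> {-D<..<D}" using that ab by auto
    have "norm (G (Suc n) x) \<le> lam (Suc n)" using bd x by (simp add: G_def)
    moreover have "\<bar>(b - x) ^ n / fact n\<bar> \<le> (b-a)^n"
    proof -
      have "(b - x)^n \<le> (b-a)^n" using that by (intro power_mono) auto
      moreover have "(b-x)^n / fact n \<le> (b-x)^n / 1"
        using that by (intro divide_left_mono) (auto simp: fact_ge_1)
      moreover have "0 \<le> (b-x)^n / fact n" using that by auto
      ultimately show ?thesis by simp
    qed
    ultimately have "\<bar>(b - x) ^ n / fact n\<bar> * norm (G (Suc n) x) \<le> (b-a)^n * lam (Suc n)"
      using ab by (intro mult_mono) (auto intro: order_trans[OF abs_ge_zero])
    then show ?thesis by simp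
  qed
  have l0: "0 \<le> lam (Suc n)"
  proof -
    have "(0::real) \<in> {-D<..<D}" using D by simp
    then show ?thesis using bd by (meson norm_ge_zero order_trans)
  qed
  have "norm (f b - (\<Sum>i<Suc n. ((b-a) ^ i / fact i) *\<^sub>R G i a)) \<le> ((b-a)^n * lam (Suc n)) * Henstock_Kurzweil_Integration.content {a..b}"
    by (rule has_integral_bound_real[where S="{a,b}", OF _ _ T[unfolded diff_Suc_1]]) (use bnd l0 ab in auto)
  then have "norm (f b - (\<Sum>i\<le>n. ((b-a)^i / fact i) *\<^sub>R F i a)) \<le> ((b-a)^n * lam (Suc n)) * (b - a)"
    using ab unfolding sumeq by simp
  then show ?thesis by (simp add: algebra_simps)
qed


lemma pow_ge_Suc: "real N + 1 \<le> 4 ^ N"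
proof (induction N)
  case 0 then show ?case by simp
next
  case (Suc N) then show ?case by simp
qed

lemma approx_generic:
  fixes g :: "real \<Rightarrow> real" and c :: "nat \<Rightarrow> real \<Rightarrow> real"
  assumes n1: "1 \<le> n" and D: "0 < D" and L: "0 < L" and R: "0 \<le> R"
    and eps: "0 < \<epsilon>"
    and tay: "\<And>a b. -D \<le> a \<Longrightarrow> a \<le> b \<Longrightarrow> b \<le> D \<Longrightarrow>
        \<bar>g b - (\<Sum>i\<le>n. (b-a)^i / fact i * c i a)\<bar> \<le> R * (b-a)^(Suc n)"
    and cb: "\<And>k a. k \<le> n \<Longrightarrow> -D \<le> a \<Longrightarrow> a \<le> D \<Longrightarrow> \<bar>c k a\<bar> \<le> L"
    and NT: "max 1 (4 * R * (2 * D)^(Suc n)) * \<epsilon> powr (-1 / real n) \<le> real N"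
    and NL: "real n ^ 2 * L + 2 * D \<le> real N"
    and x: "-D \<le> x" "x \<le> D"
  shows "\<bar>g x - (c 0 (-D) + Pval ((n+2)*N) n N (cf c D (2*D/real N)) ((x+D)/(2*D/real N)))\<bar> \<le> \<epsilon> / 2"
proof -
  define T where "T = max 1 (4 * R * (2 * D)^(Suc n))"
  define h where "h = 2 * D / real N"
  define m where "m = (n+2) * N"
  have "0 < real n ^ 2 * L + 2 * D" using D L by (intro add_nonneg_pos) auto
  then have Npos: "0 < N" using NL by simp
  have NposR: "0 < real N" using Npos by simp
  have h1: "h \<le> 1" using NL D L NposR by (simp add: h_def field_simps) (smt (verit) mult_nonneg_nonneg of_nat_0_le_iff zero_le_power2)
  have h0: "0 < h" using D NposR by (simp add: h_def)
  have Lb: "\<bar>cf c D h j (Suc i)\<bar> \<le> L" if "j < N" "i < n" for j i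
  proof -
    have a: "-D \<le> -D + real j * h" using h0 by simp
    have "real j * h \<le> real N * h" using that h0 by (intro mult_right_mono) auto
    then have a2: "-D + real j * h \<le> D" using NposR by (simp add: h_def)
    have hp: "h^(Suc i) / fact (Suc i) \<le> 1"
    proof -
      have "h^(Suc i) \<le> 1" using h0 h1 by (intro power_le_one) auto
      moreover have "h^(Suc i) / fact (Suc i) \<le> h^(Suc i) / 1"
        using h0 fact_ge_1[of "Suc i", where 'a=real] by (intro divide_left_mono) (auto simp del: fact_Suc)
      ultimately show ?thesis by (metis div_by_1 order_trans)
    qed
    have "\<bar>cf c D h j (Suc i)\<bar> = (h^(Suc i) / fact (Suc i)) * \<bar>c (Suc i) (-D + real j * h)\<bar>"
      using h0 by (simp add: cf_def abs_mult)
    also have "\<dots> \<le> 1 * L"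
      using hp cb[of "Suc i" "-D + real j * h"] a a2 that h0 by (intro mult_mono) auto
    finally show ?thesis by simp
  qed
  have main: "\<bar>g x - (c 0 (-D) + (\<Sum>j<N. \<Sum>i<n. cf c D h j (Suc i) * pw m (min (relu ((x + D) / h - real j)) 1) i))\<bar>
     \<le> real N * R * h^(Suc n) + real N * real n * L * real n / 4^(Suc m)"
    by (rule net_approx[OF D Npos R tay x h_def _ Lb]) (use L in auto)
  have "T^1 \<le> T ^ n" using n1 by (intro power_increasing) (auto simp: T_def)
  then have T1: "T \<le> T ^ n" by simp
  have Tn: "T ^ n / \<epsilon> \<le> real N ^ n"
  proof -
    have "(T * \<epsilon> powr (-1 / real n)) ^ n \<le> real N ^ n"
      using NT by (intro power_mono) (auto simp: T_def)
    moreover have "(\<epsilon> powr (-1 / real n)) ^ n = \<epsilon> powr (-1)"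
      using eps n1 by (simp add: powr_power)
    ultimately show ?thesis using eps by (simp add: power_mult_distrib powr_neg_one divide_inverse)
  qed
  have e1: "real N * R * h^(Suc n) \<le> \<epsilon> / 4"
  proof -
    have "real N * R * h^(Suc n) = R * (2 * D)^(Suc n) / real N ^ n"
      using NposR by (simp add: h_def power_divide field_simps)
    also have "\<dots> \<le> (T / 4) / real N ^ n"
      using NposR by (intro divide_right_mono) (auto simp: T_def)
    also have "\<dots> \<le> (T / 4) / (T ^ n / \<epsilon>)"
    proof (rule divide_left_mono[OF Tn])
      show "0 \<le> T / 4" by (simp add: T_def)
      show "0 < real N ^ n * (T ^ n / \<epsilon>)" using NposR eps by (simp add: T_def)
    qed
    also have "\<dots> = \<epsilon> * T / (4 * T ^ n)" using eps by (simp add: field_simps)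
    also have "\<dots> \<le> \<epsilon> * T ^ n / (4 * T ^ n)"
      using T1 eps by (intro divide_right_mono mult_left_mono) (auto simp: T_def)
    also have "\<dots> = \<epsilon> / 4" by (simp add: T_def)
    finally show ?thesis .
  qed
  have e2: "real N * real n * L * real n / 4^(Suc m) \<le> \<epsilon> / 4"
  proof -
    have eN: "1 \<le> \<epsilon> * real N ^ n"
    proof -
      have "1 \<le> T ^ n" by (simp add: T_def)
      also have "\<dots> \<le> \<epsilon> * real N ^ n" using Tn eps by (simp add: field_simps)
      finally show ?thesis .
    qed
    have "(real N + 1) ^ (n+2) \<le> (4 ^ N) ^ (n+2)" using pow_ge_Suc[of N] by (intro power_mono) auto
    also have "\<dots> = 4 ^ m" by (simp add: m_def power_mult[symmetric] mult.commute power_add)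
    finally have p: "(real N + 1) ^ (n+2) \<le> 4 ^ m" .
    have q: "real N ^ n * (real N * (real N + 1)) \<le> (real N + 1) ^ (n+2)"
    proof -
      have "real N ^ n \<le> (real N + 1) ^ n" by (intro power_mono) auto
      moreover have "real N * (real N + 1) \<le> (real N + 1) * (real N + 1)" by (intro mult_right_mono) auto
      ultimately have "real N ^ n * (real N * (real N + 1)) \<le> (real N + 1) ^ n * ((real N + 1) * (real N + 1))"
        by (intro mult_mono) auto
      then show ?thesis by (simp add: power_add power2_eq_square mult.commute)
    qed
    have "real n * L * real n \<le> real N + 1" using NL D by (simp add: power2_eq_square algebra_simps)
    then have "real N * (real n * L * real n) \<le> real N * (real N + 1)"
      using NposR by (intro mult_left_mono) auto
    then have "real N * real n * L * real n \<le> real N * (real N + 1)" by (simp add: mult.assoc)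
    also have "\<dots> \<le> (\<epsilon> * real N ^ n) * (real N * (real N + 1))"
      using mult_right_mono[OF eN, of "real N * (real N + 1)"] NposR by simp
    also have "\<dots> \<le> \<epsilon> * 4 ^ m"
    proof -
      have "real N ^ n * (real N * (real N + 1)) \<le> 4 ^ m" using q p by linarith
      then have "\<epsilon> * (real N ^ n * (real N * (real N + 1))) \<le> \<epsilon> * 4 ^ m"
        using eps by (intro mult_left_mono) auto
      then show ?thesis by (simp add: mult.assoc)
    qed
    finally have "real N * real n * L * real n \<le> \<epsilon> * 4 ^ m" .
    then show ?thesis by (simp add: field_simps)
  qed
  have pv: "Pval m n N (cf c D h) ((x+D)/h) = (\<Sum>j<N. \<Sum>i<n. cf c D h j (Suc i) * pw m (min (relu ((x + D) / h - real j)) 1) i)"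
    by (simp add: Pval_def)
  show ?thesis using main e1 e2 unfolding m_def[symmetric] h_def[symmetric] pv by linarith
qed


lemma small_powr:
  fixes \<delta> Q :: real
  assumes "0 < \<delta>"
  shows "\<exists>e0>0. \<forall>\<epsilon>. 0 < \<epsilon> \<longrightarrow> \<epsilon> < e0 \<longrightarrow> Q \<le> \<epsilon> powr (-\<delta>)"
proof -
  define M where "M = max Q 1"
  define e0 where "e0 = M powr (-1/\<delta>)"
  have M: "1 \<le> M" by (simp add: M_def)
  have e0: "0 < e0" using M by (simp add: e0_def)
  have "Q \<le> \<epsilon> powr (-\<delta>)" if "0 < \<epsilon>" "\<epsilon> < e0" for \<epsilon>
  proof -
    have "e0 powr (-\<delta>) \<le> \<epsilon> powr (-\<delta>)"
      using that assms by (intro powr_mono2') auto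
    moreover have "e0 powr (-\<delta>) = M" using M assms by (simp add: e0_def powr_powr)
    ultimately show ?thesis by (simp add: M_def)
  qed
  then show ?thesis using e0 by blast
qed

lemma depth_ok:
  fixes n :: nat
  assumes n: "2 \<le> n" and A: "0 \<le> A" and B: "0 \<le> Bc"
  shows "\<exists>e0>0. \<forall>\<epsilon>. 0 < \<epsilon> \<longrightarrow> \<epsilon> < e0 \<longrightarrow>
    A * \<epsilon> powr (-2 / real n) + Bc \<le> 1 * (1 * \<epsilon> powr (-2 / (real n - 1))
          + \<epsilon> powr (-1 / (real n - 1)) * ln (2 / \<epsilon>)
          + \<epsilon> powr (-1 / (real n - 1)) * lnD
          + \<epsilon> powr (-1 / (real n - 1)) * lnl)"
proof -
  define \<delta> where "\<delta> = 2 / (real n - 1) - 2 / real n"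
  have n1: "1 < real n" using n by simp
  have dpos: "0 < \<delta>" using n1 by (simp add: \<delta>_def field_simps)
  have p1: "0 < 1 / (real n - 1)" using n1 by simp
  obtain ea where ea: "ea > 0" "\<forall>\<epsilon>. 0 < \<epsilon> \<longrightarrow> \<epsilon> < ea \<longrightarrow> 2 * (\<bar>lnD\<bar> + \<bar>lnl\<bar>) \<le> \<epsilon> powr (-(1 / (real n - 1)))"
    using small_powr[OF p1] by blast
  obtain eb where eb: "eb > 0" "\<forall>\<epsilon>. 0 < \<epsilon> \<longrightarrow> \<epsilon> < eb \<longrightarrow> 2 * (A + Bc) \<le> \<epsilon> powr (-\<delta>)"
    using small_powr[OF dpos] by blast
  define e0 where "e0 = min 1 (min ea eb)"
  have "A * \<epsilon> powr (-2 / real n) + Bc \<le> 1 * (1 * \<epsilon> powr (-2 / (real n - 1))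
          + \<epsilon> powr (-1 / (real n - 1)) * ln (2 / \<epsilon>)
          + \<epsilon> powr (-1 / (real n - 1)) * lnD
          + \<epsilon> powr (-1 / (real n - 1)) * lnl)" if e: "0 < \<epsilon>" "\<epsilon> < e0" for \<epsilon>
  proof -
    define X where "X = \<epsilon> powr (-1 / (real n - 1))"
    define Z where "Z = \<epsilon> powr (-2 / real n)"
    have e1: "\<epsilon> < 1" using e by (simp add: e0_def)
    have X0: "0 \<le> X" by (simp add: X_def)
    have XX: "X * X = \<epsilon> powr (-2 / (real n - 1))"
      using e by (simp add: X_def powr_add[symmetric])
    have split: "\<epsilon> powr (-2 / (real n - 1)) = Z * \<epsilon> powr (-\<delta>)"
      using e by (simp add: Z_def \<delta>_def powr_add[symmetric])
    have Z1: "1 \<le> Z"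
    proof -
      have "1 powr (-2 / real n) \<le> \<epsilon> powr (-2 / real n)"
        using e e1 n1 by (intro powr_mono2') auto
      then show ?thesis by (simp add: Z_def)
    qed
    have ln0: "0 \<le> ln (2 / \<epsilon>)" using e e1 by simp
    have a: "2 * (\<bar>lnD\<bar> + \<bar>lnl\<bar>) \<le> X" using ea e by (simp add: X_def e0_def)
    have b: "2 * (A + Bc) \<le> \<epsilon> powr (-\<delta>)" using eb e by (simp add: e0_def)
    have "X * (lnD + lnl) \<ge> - (X * X) / 2"
    proof -
      have "X * (lnD + lnl) \<ge> - (X * (\<bar>lnD\<bar> + \<bar>lnl\<bar>))"
        using X0 by (smt (verit) mult_left_mono abs_ge_self abs_ge_minus_self mult_minus_right)
      moreover have "X * (\<bar>lnD\<bar> + \<bar>lnl\<bar>) \<le> X * (X / 2)" using a X0 by (intro mult_left_mono) auto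
      ultimately show ?thesis by simp
    qed
    moreover have "0 \<le> X * ln (2 / \<epsilon>)" using X0 ln0 by simp
    moreover have "A * Z + Bc \<le> Z * \<epsilon> powr (-\<delta>) / 2"
    proof -
      have "Bc * 1 \<le> Bc * Z" using B Z1 by (intro mult_left_mono) auto
      then have "A * Z + Bc \<le> A * Z + Bc * Z" by simp
      also have "\<dots> = Z * (A + Bc)" by (simp add: algebra_simps)
      also have "\<dots> \<le> Z * (\<epsilon> powr (-\<delta>) / 2)" using b Z1 by (intro mult_left_mono) auto
      finally show ?thesis by simp
    qed
    ultimately show ?thesis
      unfolding X_def[symmetric] Z_def[symmetric] XX[symmetric] using split XX by (simp add: algebra_simps)
  qed
  moreover have "0 < e0" using ea eb by (simp add: e0_def)
  ultimately show ?thesis by blast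
qed


definition pT :: "nat \<Rightarrow> real \<Rightarrow> (nat \<Rightarrow> real) \<Rightarrow> real" where
  "pT n D lam = max 1 (4 * lam (Suc n) * (2 * D)^(Suc n))"
definition pNc :: "nat \<Rightarrow> real \<Rightarrow> (nat \<Rightarrow> real) \<Rightarrow> nat" where
  "pNc n D lam = nat \<lceil>real n ^ 2 * lam n + 2 * D\<rceil>"
definition pN :: "nat \<Rightarrow> real \<Rightarrow> (nat \<Rightarrow> real) \<Rightarrow> real \<Rightarrow> nat" where
  "pN n D lam \<epsilon> = nat \<lceil>pT n D lam * \<epsilon> powr (-1 / real n)\<rceil> + pNc n D lam"
definition pr0 :: "real \<Rightarrow> nat" where
  "pr0 D = nat \<lceil>1 / (2 * min D 1)\<rceil>"
definition pc1 :: "real \<Rightarrow> real" where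
  "pc1 D = 1 / max 1 D"
definition pc2 :: "real \<Rightarrow> nat \<Rightarrow> real" where
  "pc2 D N = real N / (2 * D * pc1 D * 2 ^ (N + pr0 D))"

lemma two_pow_ge: "real k \<le> 2 ^ k"
proof (induction k)
  case 0 then show ?case by simp
next
  case (Suc k)
  have "1 \<le> (2::real) ^ k" by simp
  moreover have "real (Suc k) = real k + 1" "(2::real)^Suc k = 2 * 2^k" by simp_all
  ultimately show ?case using Suc.IH by linarith
qed

lemma params:
  assumes n: "1 \<le> n" and D: "0 < D" and L: "0 < lam n" and R: "0 \<le> lam (Suc n)"
    and e: "0 < \<epsilon>" "\<epsilon> \<le> 1"
  defines "N \<equiv> pN n D lam \<epsilon>"
  shows "pT n D lam * \<epsilon> powr (-1 / real n) \<le> real N"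
    "real n ^ 2 * lam n + 2 * D \<le> real N"
    "real N \<le> (pT n D lam + 1 + real (pNc n D lam)) * \<epsilon> powr (-1 / real n)"
    "0 < pc1 D" "pc1 D \<le> 1" "pc1 D * D \<le> 1"
    "0 < pc2 D N" "pc2 D N \<le> 1"
    "\<And>x. pc2 D N * 2 ^ (N + pr0 D) * pc1 D * (x + D) = (x + D) / (2 * D / real N)"
    "1 \<le> N"
proof -
  define T where "T = pT n D lam"
  define Nc where "Nc = pNc n D lam"
  have T1: "1 \<le> T" by (simp add: T_def pT_def)
  have Ep: "0 < \<epsilon> powr (-1 / real n)" using e by simp
  have E1: "1 \<le> \<epsilon> powr (-1 / real n)"
  proof -
    have "1 powr (-1 / real n) \<le> \<epsilon> powr (-1 / real n)" using e n by (intro powr_mono2') auto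
    then show ?thesis by simp
  qed
  have TE: "0 \<le> T * \<epsilon> powr (-1 / real n)" using T1 Ep by simp
  have NN: "real N = real (nat \<lceil>T * \<epsilon> powr (-1 / real n)\<rceil>) + real Nc"
    by (simp add: N_def pN_def T_def Nc_def)
  have c1: "T * \<epsilon> powr (-1 / real n) \<le> real (nat \<lceil>T * \<epsilon> powr (-1 / real n)\<rceil>)"
    using TE by linarith
  have c2: "real (nat \<lceil>T * \<epsilon> powr (-1 / real n)\<rceil>) \<le> T * \<epsilon> powr (-1 / real n) + 1"
    using TE by linarith
  have q0: "0 \<le> real n ^ 2 * lam n + 2 * D" using L D by simp
  have c3: "real n ^ 2 * lam n + 2 * D \<le> real Nc" using q0 by (simp add: Nc_def pNc_def)
  have c4: "real Nc \<le> real n ^ 2 * lam n + 2 * D + 1" using q0 by (simp add: Nc_def pNc_def)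
  show "pT n D lam * \<epsilon> powr (-1 / real n) \<le> real N" using NN c1 by (simp add: T_def)
  show N2: "real n ^ 2 * lam n + 2 * D \<le> real N" using NN c3 by simp
  have "real N \<le> T * \<epsilon> powr (-1 / real n) + 1 + real Nc" using NN c2 by simp
  also have "\<dots> \<le> T * \<epsilon> powr (-1 / real n) + 1 * \<epsilon> powr (-1 / real n) + real Nc * \<epsilon> powr (-1 / real n)"
  proof -
    have "real Nc * 1 \<le> real Nc * \<epsilon> powr (-1 / real n)" using E1 by (intro mult_left_mono) auto
    then show ?thesis using E1 by simp
  qed
  also have "\<dots> = (T + 1 + real Nc) * \<epsilon> powr (-1 / real n)" by (simp add: algebra_simps)
  finally show "real N \<le> (pT n D lam + 1 + real (pNc n D lam)) * \<epsilon> powr (-1 / real n)"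
    by (simp add: T_def Nc_def)
  have "0 < real n ^ 2 * lam n + 2 * D" using L D by (intro add_nonneg_pos) auto
  then have Npos: "0 < real N" using N2 by linarith
  then show "1 \<le> N" by simp
  show c1p: "0 < pc1 D" by (simp add: pc1_def)
  show "pc1 D \<le> 1" by (simp add: pc1_def)
  show "pc1 D * D \<le> 1" using D by (simp add: pc1_def field_simps)
  have Dc: "D * pc1 D = min D 1" using D by (auto simp: pc1_def min_def max_def)
  show "0 < pc2 D N" using Npos D c1p by (simp add: pc2_def)
  have r0: "1 / (2 * min D 1) \<le> real (pr0 D)" unfolding pr0_def by linarith
  have "real N / (2 * min D 1) \<le> 2 ^ N * 2 ^ pr0 D"
  proof -
    have "real N / (2 * min D 1) = real N * (1 / (2 * min D 1))" by simp
    also have "\<dots> \<le> 2 ^ N * 2 ^ pr0 D"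
    proof (rule mult_mono)
      show "real N \<le> 2 ^ N" by (rule two_pow_ge)
      show "1 / (2 * min D 1) \<le> 2 ^ pr0 D" using two_pow_ge[of "pr0 D"] r0 by linarith
    qed (use D in auto)
    finally show ?thesis .
  qed
  then have h: "real N / (2 * D * pc1 D) \<le> 2 ^ N * 2 ^ pr0 D" by (simp add: Dc[symmetric] mult.assoc)
  have K: "0 < 2 * D * pc1 D" using D c1p by simp
  have P: "0 < (2::real) ^ N * 2 ^ pr0 D" by simp
  have "pc2 D N = (real N / (2 * D * pc1 D)) / (2 ^ N * 2 ^ pr0 D)"
    by (simp add: pc2_def power_add)
  also have "\<dots> \<le> 1" using h P by (subst divide_le_eq_1_pos) auto
  finally show "pc2 D N \<le> 1" .
  show "\<And>x. pc2 D N * 2 ^ (N + pr0 D) * pc1 D * (x + D) = (x + D) / (2 * D / real N)"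
    using D c1p by (simp add: pc2_def field_simps)
qed

lemma depth_count:
  assumes N: "1 \<le> N"
  shows "real (N + r0 + 4 + 2 * (N * (2 + (n - 1) * (2 * ((n+2)*N) + 5))))
     \<le> real (1 + 2 * (2 + (n-1)*(2*n+9))) * real N ^ 2 + real r0 + 4"
proof -
  have a: "2 * ((n+2)*N) + 5 \<le> (2*n+9) * N" using N by (simp add: algebra_simps)
  have b: "2 + (n - 1) * (2 * ((n+2)*N) + 5) \<le> (2 + (n-1)*(2*n+9)) * N"
  proof -
    have "(n - 1) * (2 * ((n+2)*N) + 5) \<le> (n - 1) * ((2*n+9) * N)" using a by simp
    moreover have "2 \<le> 2 * N" using N by simp
    ultimately show ?thesis by (simp add: algebra_simps)
  qed
  have c: "N * (2 + (n - 1) * (2 * ((n+2)*N) + 5)) \<le> N * ((2 + (n-1)*(2*n+9)) * N)"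
    using b by (rule mult_le_mono2)
  have d: "N \<le> N * N" using N by simp
  have aux: "N + r0 + 4 + 2 * X \<le> (1 + 2 * Y) * (N * N) + r0 + 4" if "X \<le> N * (Y * N)" for X Y :: nat
  proof -
    have "(1 + 2 * Y) * (N * N) = N * N + 2 * (N * (Y * N))" by (simp add: algebra_simps)
    then show ?thesis using that d by linarith
  qed
  have "N + r0 + 4 + 2 * (N * (2 + (n - 1) * (2 * ((n+2)*N) + 5))) \<le> (1 + 2 * (2 + (n-1)*(2*n+9))) * (N * N) + r0 + 4"
    by (rule aux[OF c])
  then have "real (N + r0 + 4 + 2 * (N * (2 + (n - 1) * (2 * ((n+2)*N) + 5)))) \<le> real ((1 + 2 * (2 + (n-1)*(2*n+9))) * (N * N) + r0 + 4)"
    by (simp only: of_nat_le_iff)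
  then show ?thesis by (simp add: power2_eq_square distrib_right)
qed

lemma cf_bound:
  assumes cb: "\<And>k a. k \<le> n \<Longrightarrow> -D \<le> a \<Longrightarrow> a \<le> D \<Longrightarrow> \<bar>c k a\<bar> \<le> L"
    and h: "h = 2 * D / real N" "0 < h" "h \<le> 1" and j: "j < N" and i: "i \<le> n"
  shows "\<bar>cf c D h j i\<bar> \<le> L"
proof -
  have NposR: "0 < real N" using j by simp
  have a: "-D \<le> -D + real j * h" using h(2) by simp
  have "real j * h \<le> real N * h" using j h by (intro mult_right_mono) auto
  then have a2: "-D + real j * h \<le> D" using NposR by (simp add: h)
  have hp: "h^i / fact i \<le> 1"
  proof -
    have "h^i \<le> 1" using h by (intro power_le_one) auto
    moreover have "h^i / fact i \<le> h^i / 1"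
      using h fact_ge_1[of i, where 'a=real] by (intro divide_left_mono) auto
    ultimately show ?thesis by (metis div_by_1 order_trans)
  qed
  have "\<bar>cf c D h j i\<bar> = (h^i / fact i) * \<bar>c i (-D + real j * h)\<bar>"
    using h by (simp add: cf_def abs_mult)
  also have "\<dots> \<le> 1 * L"
    using hp cb[of i "-D + real j * h"] a a2 i h by (intro mult_mono) auto
  finally show ?thesis by simp
qed


lemma B_bound_ge: "2 \<le> n \<Longrightarrow> 1 \<le> B_bound 1 1 n D lam"
  by (simp add: B_bound_def)

lemma depth_eventually:
  assumes n: "2 \<le> n" and D: "0 < D" and lp: "\<forall>m. 0 < lam m"
  shows "\<exists>\<epsilon>0>0. \<epsilon>0 \<le> 1 \<and> (\<forall>\<epsilon>. 0 < \<epsilon> \<longrightarrow> \<epsilon> < \<epsilon>0 \<longrightarrow>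
     real (pN n D lam \<epsilon> + pr0 D + 4 + 2 * (pN n D lam \<epsilon> * (2 + (n - 1) * (2 * ((n+2) * pN n D lam \<epsilon>) + 5))))
       \<le> depth_bound 1 n D lam \<epsilon>)"
proof -
  define K where "K = real (1 + 2 * (2 + (n-1)*(2*n+9)))"
  define U where "U = pT n D lam + 1 + real (pNc n D lam)"
  have K0: "0 \<le> K" by (simp add: K_def)
  obtain e0 where e0: "e0 > 0" "\<forall>\<epsilon>. 0 < \<epsilon> \<longrightarrow> \<epsilon> < e0 \<longrightarrow>
    K * U^2 * \<epsilon> powr (-2 / real n) + (real (pr0 D) + 4) \<le> 1 * (1 * \<epsilon> powr (-2 / (real n - 1))
          + \<epsilon> powr (-1 / (real n - 1)) * ln (2 / \<epsilon>)
          + \<epsilon> powr (-1 / (real n - 1)) * ln D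
          + \<epsilon> powr (-1 / (real n - 1)) * ln (lam n))"
    using depth_ok[OF n, of "K * U^2" "real (pr0 D) + 4" "ln D" "ln (lam n)"] K0 by auto
  have "real (pN n D lam \<epsilon> + pr0 D + 4 + 2 * (pN n D lam \<epsilon> * (2 + (n - 1) * (2 * ((n+2) * pN n D lam \<epsilon>) + 5))))
       \<le> depth_bound 1 n D lam \<epsilon>" if e: "0 < \<epsilon>" "\<epsilon> < min e0 1" for \<epsilon>
  proof -
    let ?N = "pN n D lam \<epsilon>"
    have n1: "1 \<le> n" using n by simp
    note P = params[OF n1 D lp[rule_format, of n] less_imp_le[OF lp[rule_format, of "Suc n"]] e(1), of]
    have e1: "\<epsilon> \<le> 1" using e by simp
    have N1: "1 \<le> ?N" using P(10)[OF e1] .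
    have NU: "real ?N \<le> U * \<epsilon> powr (-1 / real n)" using P(3)[OF e1] by (simp add: U_def)
    have "real ?N ^ 2 \<le> (U * \<epsilon> powr (-1 / real n))^2"
      using NU by (intro power_mono) auto
    also have "\<dots> = U^2 * \<epsilon> powr (-2 / real n)"
      using e by (simp add: power_mult_distrib powr_power[symmetric] power2_eq_square powr_add[symmetric])
    finally have N2: "real ?N ^ 2 \<le> U^2 * \<epsilon> powr (-2 / real n)" .
    have "real (?N + pr0 D + 4 + 2 * (?N * (2 + (n - 1) * (2 * ((n+2) * ?N) + 5))))
        \<le> K * real ?N ^ 2 + real (pr0 D) + 4"
      using depth_count[OF N1, of "pr0 D" n] by (simp add: K_def)
    also have "\<dots> \<le> K * (U^2 * \<epsilon> powr (-2 / real n)) + real (pr0 D) + 4"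
      using N2 K0 by (simp add: mult_left_mono)
    also have "\<dots> \<le> depth_bound 1 n D lam \<epsilon>"
    proof -
      have "\<epsilon> < e0" using e by simp
      then have "K * U^2 * \<epsilon> powr (-2 / real n) + (real (pr0 D) + 4) \<le> 1 * (1 * \<epsilon> powr (-2 / (real n - 1))
          + \<epsilon> powr (-1 / (real n - 1)) * ln (2 / \<epsilon>)
          + \<epsilon> powr (-1 / (real n - 1)) * ln D
          + \<epsilon> powr (-1 / (real n - 1)) * ln (lam n))" using e0(2) e(1) by blast
      then show ?thesis by (simp add: depth_bound_def mult.assoc add.assoc)
    qed
    finally show ?thesis .
  qed
  moreover have "0 < min e0 1" using e0 by simp
  ultimately show ?thesis by (intro exI[of _ "min e0 1"]) auto
qed

lemma real_case:
  fixes lam :: "nat \<Rightarrow> real" and D :: real and n :: nat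
  assumes n: "2 \<le> n" and mono: "mono lam" and lp: "\<forall>m. 0 < lam m" and D: "0 < D"
  shows "\<exists>B>0. B \<le> B_bound 1 1 n D lam \<and>
        (\<exists>\<epsilon>0 > 0. \<forall>(f :: real \<Rightarrow> real) \<epsilon>. in_P lam D f \<and> 0 < \<epsilon> \<and> \<epsilon> < \<epsilon>0 \<longrightarrow>
           (\<exists>ds ls. in_NN (depth_bound B n D lam \<epsilon>) 13 1 1 ds ls \<and>
              weights_bounded ls (max 2 (lam n)) \<and>
              (\<forall>x \<in> {-D<..<D}. \<bar>f x - hd (realize ls [x])\<bar> \<le> \<epsilon>)))"
proof (rule exI[of _ 1], intro conjI)
  show "(0::real) < 1" by simp
  show "1 \<le> B_bound 1 1 n D lam" using n by (rule B_bound_ge)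
  obtain \<epsilon>0 where e0: "\<epsilon>0 > 0" "\<epsilon>0 \<le> 1" "\<forall>\<epsilon>. 0 < \<epsilon> \<longrightarrow> \<epsilon> < \<epsilon>0 \<longrightarrow>
     real (pN n D lam \<epsilon> + pr0 D + 4 + 2 * (pN n D lam \<epsilon> * (2 + (n - 1) * (2 * ((n+2) * pN n D lam \<epsilon>) + 5))))
       \<le> depth_bound 1 n D lam \<epsilon>"
    using depth_eventually[OF n D lp] by blast
  show "\<exists>\<epsilon>0 > 0. \<forall>(f :: real \<Rightarrow> real) \<epsilon>. in_P lam D f \<and> 0 < \<epsilon> \<and> \<epsilon> < \<epsilon>0 \<longrightarrow>
           (\<exists>ds ls. in_NN (depth_bound 1 n D lam \<epsilon>) 13 1 1 ds ls \<and>
              weights_bounded ls (max 2 (lam n)) \<and>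
              (\<forall>x \<in> {-D<..<D}. \<bar>f x - hd (realize ls [x])\<bar> \<le> \<epsilon>))"
  proof (intro exI[of _ \<epsilon>0] conjI allI impI)
    show "0 < \<epsilon>0" by fact
    fix f :: "real \<Rightarrow> real" and \<epsilon> :: real
    assume a: "in_P lam D f \<and> 0 < \<epsilon> \<and> \<epsilon> < \<epsilon>0"
    then have e: "0 < \<epsilon>" "\<epsilon> < \<epsilon>0" "\<epsilon> \<le> 1" using e0 by auto
    from a obtain F :: "nat \<Rightarrow> real \<Rightarrow> real" where
      F0: "\<forall>x \<in> {-D..D}. F 0 x = f x" and
      der: "\<forall>m. \<forall>x \<in> {-D..D}. (F m has_vector_derivative F (Suc m) x) (at x within {-D..D})" and
      bd: "\<forall>m. \<forall>x \<in> {-D<..<D}. norm (F m x) \<le> lam m"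
      unfolding in_P_def by blast
    have n1: "1 \<le> n" using n by simp
    define N where "N = pN n D lam \<epsilon>"
    define m where "m = (n+2) * N"
    define rr where "rr = N + pr0 D"
    define h where "h = 2 * D / real N"
    define cR where "cR = cf F D h"
    define b where "b = F 0 (-D)"
    define Ls where "Ls = hidR rr (pc2 D N) m n N cR"
    note P = params[OF n1 D lp[rule_format, of n] less_imp_le[OF lp[rule_format, of "Suc n"]] e(1) e(3)]
    have N1: "1 \<le> N" using P(10) by (simp add: N_def)
    have h0: "0 < h" using D N1 by (simp add: h_def)
    have h1: "h \<le> 1"
    proof -
      have "2 * D \<le> real N" using P(2) lp by (simp add: N_def) (smt (verit) mult_nonneg_nonneg of_nat_0_le_iff zero_le_power2 less_imp_le)
      then show ?thesis using N1 by (simp add: h_def)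
    qed
    have cb: "\<bar>F k a\<bar> \<le> lam n" if "k \<le> n" "-D \<le> a" "a \<le> D" for k a
    proof -
      have "norm (F k a) \<le> lam k" using inP_bound_closed[OF D der bd] that by auto
      moreover have "lam k \<le> lam n" using mono that by (simp add: monoD)
      ultimately show ?thesis by simp
    qed
    have tay: "\<bar>f bb - (\<Sum>i\<le>n. (bb-a)^i / fact i * F i a)\<bar> \<le> lam (Suc n) * (bb-a)^(Suc n)"
      if "-D \<le> a" "a \<le> bb" "bb \<le> D" for a bb
      using inP_taylor[OF D F0 der bd that, of n] by simp
    have c2: "0 \<le> pc2 D N" "pc2 D N \<le> max 2 (lam n)" using P(7,8) by (auto simp: N_def)
    have cRb: "\<bar>cR j i\<bar> \<le> max 2 (lam n)" if "j < N" "1 \<le> i" "i \<le> n" for j i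
      using cf_bound[of n D F "lam n" h N j i, OF cb h_def h0 h1 that(1,3)] by (simp add: cR_def)
    have wf: "\<forall>L\<in>set Ls. Lok (max 2 (lam n)) L"
      unfolding Ls_def by (rule Lok_hidR) (use c2 cRb n1 in auto)
    have bb: "\<bar>b\<bar> \<le> max 2 (lam n)" using cb[of 0 "-D"] D by (simp add: b_def)
    have c1: "0 \<le> pc1 D" "pc1 D \<le> max 2 (lam n)" "\<bar>pc1 D * D\<bar> \<le> max 2 (lam n)"
      using P(4,5,6) D by auto
    show "\<exists>ds ls. in_NN (depth_bound 1 n D lam \<epsilon>) 13 1 1 ds ls \<and>
              weights_bounded ls (max 2 (lam n)) \<and>
              (\<forall>x \<in> {-D<..<D}. \<bar>f x - hd (realize ls [x])\<bar> \<le> \<epsilon>)"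
    proof (intro exI[of _ "fullds Ls 1"] exI[of _ "fullnet (Lin (pc1 D) D) Ls (outR b)"] conjI ballI)
      have len: "real (length Ls + 2) \<le> depth_bound 1 n D lam \<epsilon>"
      proof -
        have "length Ls + 2 \<le> N + pr0 D + 4 + 2 * (N * (2 + (n - 1) * (2 * ((n+2) * N) + 5)))"
          by (simp add: Ls_def length_hidR rr_def m_def)
        then have "real (length Ls + 2) \<le> real (N + pr0 D + 4 + 2 * (N * (2 + (n - 1) * (2 * ((n+2) * N) + 5))))"
          by (simp only: of_nat_le_iff)
        also have "\<dots> \<le> depth_bound 1 n D lam \<epsilon>" using e0(3) e by (simp add: N_def)
        finally show ?thesis .
      qed
      show "in_NN (depth_bound 1 n D lam \<epsilon>) 13 1 1 (fullds Ls 1) (fullnet (Lin (pc1 D) D) Ls (outR b))"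
        using in_NN_full[of "outR b" 13 Ls "depth_bound 1 n D lam \<epsilon>" "Lin (pc1 D) D"] len
        by (simp add: outR_def)
      show "weights_bounded (fullnet (Lin (pc1 D) D) Ls (outR b)) (max 2 (lam n))"
      proof (rule fullnet_bounded)
        show "\<forall>nr\<in>set (outR b). nok (max 2 (lam n)) nr" using nok_outR[of "max 2 (lam n)" b] bb by simp
      qed (use wf c1 in \<open>auto intro: Lok_Lin\<close>)
      fix x assume x: "x \<in> {-D<..<D}"
      have xD: "0 \<le> x + D" using x by simp
      have wfL: "\<forall>L\<in>set (hidR rr (pc2 D N) m n N cR). wfL L" using wf Lok_wfL by (auto simp: Ls_def)
      have "hd (realize (fullnet (Lin (pc1 D) D) Ls (outR b)) [x])
          = b + Pval m n N cR (pc2 D N * 2^rr * pc1 D * (x + D))"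
        unfolding Ls_def by (rule realR[OF c1(1) c2(1) xD n1 wfL])
      also have "pc2 D N * 2^rr * pc1 D * (x + D) = (x + D) / (2 * D / real N)"
        using P(9) by (simp add: rr_def N_def)
      finally have r: "hd (realize (fullnet (Lin (pc1 D) D) Ls (outR b)) [x]) = F 0 (-D) + Pval ((n+2)*N) n N (cf F D (2*D/real N)) ((x+D)/(2*D/real N))"
        by (simp add: b_def m_def cR_def h_def)
      have "\<bar>f x - (F 0 (-D) + Pval ((n+2)*N) n N (cf F D (2*D/real N)) ((x+D)/(2*D/real N)))\<bar> \<le> \<epsilon> / 2"
        by (rule approx_generic[OF n1 D lp[rule_format, of n] less_imp_le[OF lp[rule_format, of "Suc n"]] e(1) tay cb])
           (use P(1,2) x in \<open>auto simp: N_def pT_def\<close>)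
      then show "\<bar>f x - hd (realize (fullnet (Lin (pc1 D) D) Ls (outR b)) [x])\<bar> \<le> \<epsilon>"
        using r e by simp
    qed
  qed
qed

lemma complex_case:
  fixes lam :: "nat \<Rightarrow> real" and D :: real and n :: nat
  assumes n: "2 \<le> n" and mono: "mono lam" and lp: "\<forall>m. 0 < lam m" and D: "0 < D"
  shows "\<exists>B>0. B \<le> B_bound 1 1 n D lam \<and>
        (\<exists>\<epsilon>0 > 0. \<forall>(f :: real \<Rightarrow> complex) \<epsilon>. in_P lam D f \<and> 0 < \<epsilon> \<and> \<epsilon> < \<epsilon>0 \<longrightarrow>
           (\<exists>ds ls. in_NN (depth_bound B n D lam \<epsilon>) 15 1 2 ds ls \<and>
              weights_bounded ls (max 2 (lam n)) \<and>
              (\<forall>x \<in> {-D<..<D}. cmod (f x - Complex (realize ls [x] ! 0) (realize ls [x] ! 1)) \<le> \<epsilon>)))"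
proof (rule exI[of _ 1], intro conjI)
  show "(0::real) < 1" by simp
  show "1 \<le> B_bound 1 1 n D lam" using n by (rule B_bound_ge)
  obtain \<epsilon>0 where e0: "\<epsilon>0 > 0" "\<epsilon>0 \<le> 1" "\<forall>\<epsilon>. 0 < \<epsilon> \<longrightarrow> \<epsilon> < \<epsilon>0 \<longrightarrow>
     real (pN n D lam \<epsilon> + pr0 D + 4 + 2 * (pN n D lam \<epsilon> * (2 + (n - 1) * (2 * ((n+2) * pN n D lam \<epsilon>) + 5))))
       \<le> depth_bound 1 n D lam \<epsilon>"
    using depth_eventually[OF n D lp] by blast
  show "\<exists>\<epsilon>0 > 0. \<forall>(f :: real \<Rightarrow> complex) \<epsilon>. in_P lam D f \<and> 0 < \<epsilon> \<and> \<epsilon> < \<epsilon>0 \<longrightarrow>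
           (\<exists>ds ls. in_NN (depth_bound 1 n D lam \<epsilon>) 15 1 2 ds ls \<and>
              weights_bounded ls (max 2 (lam n)) \<and>
              (\<forall>x \<in> {-D<..<D}. cmod (f x - Complex (realize ls [x] ! 0) (realize ls [x] ! 1)) \<le> \<epsilon>))"
  proof (intro exI[of _ \<epsilon>0] conjI allI impI)
    show "0 < \<epsilon>0" by fact
    fix f :: "real \<Rightarrow> complex" and \<epsilon> :: real
    assume a: "in_P lam D f \<and> 0 < \<epsilon> \<and> \<epsilon> < \<epsilon>0"
    then have e: "0 < \<epsilon>" "\<epsilon> < \<epsilon>0" "\<epsilon> \<le> 1" using e0 by auto
    from a obtain F :: "nat \<Rightarrow> real \<Rightarrow> complex" where
      F0: "\<forall>x \<in> {-D..D}. F 0 x = f x" and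
      der: "\<forall>m. \<forall>x \<in> {-D..D}. (F m has_vector_derivative F (Suc m) x) (at x within {-D..D})" and
      bd: "\<forall>m. \<forall>x \<in> {-D<..<D}. norm (F m x) \<le> lam m"
      unfolding in_P_def by blast
    have n1: "1 \<le> n" using n by simp
    define N where "N = pN n D lam \<epsilon>"
    define m where "m = (n+2) * N"
    define rr where "rr = N + pr0 D"
    define h where "h = 2 * D / real N"
    define cR where "cR = cf (\<lambda>k a. Re (F k a)) D h"
    define cI where "cI = cf (\<lambda>k a. Im (F k a)) D h"
    define bR where "bR = Re (F 0 (-D))"
    define bI where "bI = Im (F 0 (-D))"
    define Ls where "Ls = hidC rr (pc2 D N) m n N cR cI"
    note P = params[OF n1 D lp[rule_format, of n] less_imp_le[OF lp[rule_format, of "Suc n"]] e(1) e(3)]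
    have N1: "1 \<le> N" using P(10) by (simp add: N_def)
    have h0: "0 < h" using D N1 by (simp add: h_def)
    have h1: "h \<le> 1"
    proof -
      have "2 * D \<le> real N" using P(2) lp by (simp add: N_def) (smt (verit) mult_nonneg_nonneg of_nat_0_le_iff zero_le_power2 less_imp_le)
      then show ?thesis using N1 by (simp add: h_def)
    qed
    have cb: "cmod (F k a) \<le> lam n" if "k \<le> n" "-D \<le> a" "a \<le> D" for k a
    proof -
      have "norm (F k a) \<le> lam k" using inP_bound_closed[OF D der bd] that by auto
      moreover have "lam k \<le> lam n" using mono that by (simp add: monoD)
      ultimately show ?thesis by simp
    qed
    have cbR: "\<bar>Re (F k a)\<bar> \<le> lam n" if "k \<le> n" "-D \<le> a" "a \<le> D" for k a
      using cb[OF that] abs_Re_le_cmod[of "F k a"] by linarith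
    have cbI: "\<bar>Im (F k a)\<bar> \<le> lam n" if "k \<le> n" "-D \<le> a" "a \<le> D" for k a
      using cb[OF that] abs_Im_le_cmod[of "F k a"] by linarith
    have tayC: "cmod (f bb - (\<Sum>i\<le>n. ((bb-a)^i / fact i) *\<^sub>R F i a)) \<le> lam (Suc n) * (bb-a)^(Suc n)"
      if "-D \<le> a" "a \<le> bb" "bb \<le> D" for a bb
      using inP_taylor[OF D F0 der bd that, of n] by simp
    have tayR: "\<bar>Re (f bb) - (\<Sum>i\<le>n. (bb-a)^i / fact i * Re (F i a))\<bar> \<le> lam (Suc n) * (bb-a)^(Suc n)"
      if "-D \<le> a" "a \<le> bb" "bb \<le> D" for a bb
      using tayC[OF that] abs_Re_le_cmod[of "f bb - (\<Sum>i\<le>n. ((bb-a)^i / fact i) *\<^sub>R F i a)"] by simp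
    have tayI: "\<bar>Im (f bb) - (\<Sum>i\<le>n. (bb-a)^i / fact i * Im (F i a))\<bar> \<le> lam (Suc n) * (bb-a)^(Suc n)"
      if "-D \<le> a" "a \<le> bb" "bb \<le> D" for a bb
      using tayC[OF that] abs_Im_le_cmod[of "f bb - (\<Sum>i\<le>n. ((bb-a)^i / fact i) *\<^sub>R F i a)"] by simp
    have c2: "0 \<le> pc2 D N" "pc2 D N \<le> max 2 (lam n)" using P(7,8) by (auto simp: N_def)
    have cRb: "\<bar>cR j i\<bar> \<le> max 2 (lam n)" if "j < N" "1 \<le> i" "i \<le> n" for j i
      using cf_bound[of n D "\<lambda>k a. Re (F k a)" "lam n" h N j i, OF cbR h_def h0 h1 that(1,3)] by (simp add: cR_def)
    have cIb: "\<bar>cI j i\<bar> \<le> max 2 (lam n)" if "j < N" "1 \<le> i" "i \<le> n" for j i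
      using cf_bound[of n D "\<lambda>k a. Im (F k a)" "lam n" h N j i, OF cbI h_def h0 h1 that(1,3)] by (simp add: cI_def)
    have wf: "\<forall>L\<in>set Ls. Lok (max 2 (lam n)) L"
      unfolding Ls_def by (rule Lok_hidC) (use c2 cRb cIb n1 in auto)
    have bb: "\<bar>bR\<bar> \<le> max 2 (lam n)" "\<bar>bI\<bar> \<le> max 2 (lam n)"
      using cbR[of 0 "-D"] cbI[of 0 "-D"] D by (auto simp: bR_def bI_def)
    have c1: "0 \<le> pc1 D" "pc1 D \<le> max 2 (lam n)" "\<bar>pc1 D * D\<bar> \<le> max 2 (lam n)"
      using P(4,5,6) D by auto
    show "\<exists>ds ls. in_NN (depth_bound 1 n D lam \<epsilon>) 15 1 2 ds ls \<and>
              weights_bounded ls (max 2 (lam n)) \<and>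
              (\<forall>x \<in> {-D<..<D}. cmod (f x - Complex (realize ls [x] ! 0) (realize ls [x] ! 1)) \<le> \<epsilon>)"
    proof (intro exI[of _ "fullds Ls 2"] exI[of _ "fullnet (Lin (pc1 D) D) Ls (outC bR bI)"] conjI ballI)
      have len: "real (length Ls + 2) \<le> depth_bound 1 n D lam \<epsilon>"
      proof -
        have "length Ls + 2 \<le> N + pr0 D + 4 + 2 * (N * (2 + (n - 1) * (2 * ((n+2) * N) + 5)))"
          by (simp add: Ls_def length_hidC rr_def m_def)
        then have "real (length Ls + 2) \<le> real (N + pr0 D + 4 + 2 * (N * (2 + (n - 1) * (2 * ((n+2) * N) + 5))))"
          by (simp only: of_nat_le_iff)
        also have "\<dots> \<le> depth_bound 1 n D lam \<epsilon>" using e0(3) e by (simp add: N_def)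
        finally show ?thesis .
      qed
      show "in_NN (depth_bound 1 n D lam \<epsilon>) 15 1 2 (fullds Ls 2) (fullnet (Lin (pc1 D) D) Ls (outC bR bI))"
      proof -
        have "length (outC bR bI) = 2" by (simp add: outC_def)
        then show ?thesis using in_NN_full[of "outC bR bI" 15 Ls "depth_bound 1 n D lam \<epsilon>" "Lin (pc1 D) D"] len
          by (simp add: outC_def numeral_2_eq_2)
      qed
      show "weights_bounded (fullnet (Lin (pc1 D) D) Ls (outC bR bI)) (max 2 (lam n))"
      proof (rule fullnet_bounded)
        show "\<forall>nr\<in>set (outC bR bI). nok (max 2 (lam n)) nr" using nok_outC[of "max 2 (lam n)" bR bI] bb by simp
      qed (use wf c1 in \<open>auto intro: Lok_Lin\<close>)
      fix x assume x: "x \<in> {-D<..<D}"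
      have xD: "0 \<le> x + D" using x by simp
      have wfL: "\<forall>L\<in>set (hidC rr (pc2 D N) m n N cR cI). wfL L" using wf Lok_wfL by (auto simp: Ls_def)
      have Y: "pc2 D N * 2^rr * pc1 D * (x + D) = (x + D) / (2 * D / real N)"
        using P(9) by (simp add: rr_def N_def)
      note RC = realC[OF c1(1) c2(1) xD n1 wfL, of bR bI]
      have r0: "realize (fullnet (Lin (pc1 D) D) Ls (outC bR bI)) [x] ! 0 = Re (F 0 (-D)) + Pval ((n+2)*N) n N (cf (\<lambda>k a. Re (F k a)) D (2*D/real N)) ((x+D)/(2*D/real N))"
        using RC(1) Y by (simp add: Ls_def bR_def m_def cR_def h_def)
      have r1: "realize (fullnet (Lin (pc1 D) D) Ls (outC bR bI)) [x] ! 1 = Im (F 0 (-D)) + Pval ((n+2)*N) n N (cf (\<lambda>k a. Im (F k a)) D (2*D/real N)) ((x+D)/(2*D/real N))"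
        using RC(2) Y by (simp add: Ls_def bI_def m_def cI_def h_def)
      have eR: "\<bar>Re (f x) - (Re (F 0 (-D)) + Pval ((n+2)*N) n N (cf (\<lambda>k a. Re (F k a)) D (2*D/real N)) ((x+D)/(2*D/real N)))\<bar> \<le> \<epsilon> / 2"
        by (rule approx_generic[where g="\<lambda>x. Re (f x)" and c="\<lambda>k a. Re (F k a)", OF n1 D lp[rule_format, of n] less_imp_le[OF lp[rule_format, of "Suc n"]] e(1) tayR cbR])
           (use P(1,2) x in \<open>auto simp: N_def pT_def\<close>)
      have eI: "\<bar>Im (f x) - (Im (F 0 (-D)) + Pval ((n+2)*N) n N (cf (\<lambda>k a. Im (F k a)) D (2*D/real N)) ((x+D)/(2*D/real N)))\<bar> \<le> \<epsilon> / 2"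
        by (rule approx_generic[where g="\<lambda>x. Im (f x)" and c="\<lambda>k a. Im (F k a)", OF n1 D lp[rule_format, of n] less_imp_le[OF lp[rule_format, of "Suc n"]] e(1) tayI cbI])
           (use P(1,2) x in \<open>auto simp: N_def pT_def\<close>)
      let ?z = "f x - Complex (realize (fullnet (Lin (pc1 D) D) Ls (outC bR bI)) [x] ! 0) (realize (fullnet (Lin (pc1 D) D) Ls (outC bR bI)) [x] ! 1)"
      have "cmod ?z \<le> \<bar>Re ?z\<bar> + \<bar>Im ?z\<bar>" by (rule cmod_le)
      also have "\<dots> \<le> \<epsilon> / 2 + \<epsilon> / 2" using eR eI r0 r1 by simp
      finally show "cmod ?z \<le> \<epsilon>" by simp
    qed
  qed
qed

theorem propositionA3:
  shows
  "(\<exists>C > 0. \<forall>n::nat \<ge> 2. \<exists>Ct > 0. \<forall>(lam :: nat \<Rightarrow> real) (D :: real).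
      mono lam \<and> (\<forall>m. lam m > 0) \<and> D > 0 \<longrightarrow>
      (\<exists>B > 0. B \<le> B_bound C Ct n D lam \<and>
        (\<exists>\<epsilon>0 > 0. \<forall>(f :: real \<Rightarrow> real) \<epsilon>. in_P lam D f \<and> 0 < \<epsilon> \<and> \<epsilon> < \<epsilon>0 \<longrightarrow>
           (\<exists>ds ls. in_NN (depth_bound B n D lam \<epsilon>) 13 1 1 ds ls \<and>
              weights_bounded ls (max 2 (lam n)) \<and>
              (\<forall>x \<in> {-D<..<D}. \<bar>f x - hd (realize ls [x])\<bar> \<le> \<epsilon>)))))
   \<and>
   (\<exists>C > 0. \<forall>n::nat \<ge> 2. \<exists>Ct > 0. \<forall>(lam :: nat \<Rightarrow> real) (D :: real).
      mono lam \<and> (\<forall>m. lam m > 0) \<and> D > 0 \<longrightarrow>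
      (\<exists>B > 0. B \<le> B_bound C Ct n D lam \<and>
        (\<exists>\<epsilon>0 > 0. \<forall>(f :: real \<Rightarrow> complex) \<epsilon>. in_P lam D f \<and> 0 < \<epsilon> \<and> \<epsilon> < \<epsilon>0 \<longrightarrow>
           (\<exists>ds ls. in_NN (depth_bound B n D lam \<epsilon>) 15 1 2 ds ls \<and>
              weights_bounded ls (max 2 (lam n)) \<and>
              (\<forall>x \<in> {-D<..<D}.
                 cmod (f x - Complex (realize ls [x] ! 0) (realize ls [x] ! 1)) \<le> \<epsilon>)))))"
proof (intro conjI)
  show "\<exists>C > 0. \<forall>n::nat \<ge> 2. \<exists>Ct > 0. \<forall>(lam :: nat \<Rightarrow> real) (D :: real).
      mono lam \<and> (\<forall>m. lam m > 0) \<and> D > 0 \<longrightarrow>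
      (\<exists>B > 0. B \<le> B_bound C Ct n D lam \<and>
        (\<exists>\<epsilon>0 > 0. \<forall>(f :: real \<Rightarrow> real) \<epsilon>. in_P lam D f \<and> 0 < \<epsilon> \<and> \<epsilon> < \<epsilon>0 \<longrightarrow>
           (\<exists>ds ls. in_NN (depth_bound B n D lam \<epsilon>) 13 1 1 ds ls \<and>
              weights_bounded ls (max 2 (lam n)) \<and>
              (\<forall>x \<in> {-D<..<D}. \<bar>f x - hd (realize ls [x])\<bar> \<le> \<epsilon>))))"
    by (rule exI[of _ 1], rule conjI, rule zero_less_one, intro allI impI, rule exI[of _ 1],
        rule conjI, rule zero_less_one, intro allI impI, elim conjE, rule real_case; assumption)
  show "\<exists>C > 0. \<forall>n::nat \<ge> 2. \<exists>Ct > 0. \<forall>(lam :: nat \<Rightarrow> real) (D :: real).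
      mono lam \<and> (\<forall>m. lam m > 0) \<and> D > 0 \<longrightarrow>
      (\<exists>B > 0. B \<le> B_bound C Ct n D lam \<and>
        (\<exists>\<epsilon>0 > 0. \<forall>(f :: real \<Rightarrow> complex) \<epsilon>. in_P lam D f \<and> 0 < \<epsilon> \<and> \<epsilon> < \<epsilon>0 \<longrightarrow>
           (\<exists>ds ls. in_NN (depth_bound B n D lam \<epsilon>) 15 1 2 ds ls \<and>
              weights_bounded ls (max 2 (lam n)) \<and>
              (\<forall>x \<in> {-D<..<D}.
                 cmod (f x - Complex (realize ls [x] ! 0) (realize ls [x] ! 1)) \<le> \<epsilon>))))"
    by (rule exI[of _ 1], rule conjI, rule zero_less_one, intro allI impI, rule exI[of _ 1],
        rule conjI, rule zero_less_one, intro allI impI, elim conjE, rule complex_case; assumption)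
qed

end
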